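(* For every $n\ge 0$ one has $\theta(\mathbf{Sym}_n)=\mathcal{P}_n$. Consequently $\mathcal{P}=\bigoplus_{n\ge0}\mathcal{P}_n=\theta(\mathbf{Sym})$ is a graded Hopf subalgebra of $\mathbf{Sym}$ (closed under product and coproduct and containing $1$). Moreover $\dim\mathcal{P}_n=f_n$, where $f_0=f_1=f_2=1$ and $f_{n+2}=f_{n+1}+f_n$; for $n\ge1$ this equals the number of compositions of $n$ into odd parts.
   Context: $\mathbf{Sym}$ denotes the algebra of noncommutative symmetric functions over $\mathbb{Q}$: the free associative algebra on generators $S_1,S_2,\dots$ with $S_0=1$ and $\deg S_n=n$. It is a graded Hopf algebra with coproduct $\Delta S_n=\sum_{i+j=n}S_i\otimes S_j$, and $\mathbf{Sym}_n$ is its degree-$n$ component. For a composition $I=(i_1,\dots,i_r)$ of $n$, set $S^I=S_{i_1}\cdots S_{i_r}$ and $\operatorname{Des}(I)=\{i_1,i_1+i_2,\dots,i_1+\cdots+i_{r-1}\}\subseteq[1,n-1]$. The ribbon functions $R_J$ are defined by $S^I=\sum_{J\models n,\ \operatorname{Des}(J)\subseteq\operatorname{Des}(I)}R_J$, and $\Lambda_n=R_{(1^n)}$ with $\Lambda_0=1$. The peak set of a composition $J$ of $n$ is $HP(J)=\{a\in\operatorname{Des}(J): a\neq 1,\ a-1\notin\operatorname{Des}(J)\}\subseteq[2,n-1]$. A subset $P\subseteq[2,n-1]$ is a peak set if $a\in P$ implies $a-1\notin P$. For such $P$, the peak class is $\Pi_P=\sum_{J\models n,\ HP(J)=P}R_J$,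 and $\mathcal{P}_n$ is the linear span of all $\Pi_P$ with $P$ a peak set in $[2,n-1]$. Let $\theta:\mathbf{Sym}\to\mathbf{Sym}$ be the algebra endomorphism defined by $\theta(S_n)=\tilde S_n:=\sum_{k=0}^{n}\Lambda_kS_{n-k}$; this is the $(1-q)$-transform $F(A)\mapsto F((1-q)A)$ specialized at $q=-1$. *)

theory Defs
  imports Complex_Main "HOL-Library.Function_Algebras"
begin

text \<open>An element of Sym is encoded by its
coefficient function F :: nat list => rat in the basis S^I (I a composition):
F represents sum_I F(I) S^I. Elements of Sym (x) Sym are encoded likewise in the basis
S^I (x) S^J, by functions (nat list * nat list) => rat.\<close>

type_synonym sym = "nat list \<Rightarrow> rat"
type_synonym sym2 = "nat list \<times> nat list \<Rightarrow> rat"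

definition comps :: "nat \<Rightarrow> nat list set" where
  "comps n = {I. sum_list I = n \<and> 0 \<notin> set I}"

definition Sym :: "sym set" where
  "Sym = {F. finite {I. F I \<noteq> 0} \<and> (\<forall>I. F I \<noteq> 0 \<longrightarrow> 0 \<notin> set I)}"

definition Sym_deg :: "nat \<Rightarrow> sym set" where
  "Sym_deg n = {F. \<forall>I. F I \<noteq> 0 \<longrightarrow> I \<in> comps n}"

definition hom_comp :: "nat \<Rightarrow> sym \<Rightarrow> sym" where
  "hom_comp n F = (\<lambda>I. if sum_list I = n then F I else 0)"

definition scaleS :: "rat \<Rightarrow> sym \<Rightarrow> sym" where
  "scaleS c F = (\<lambda>I. c * F I)"

definition scaleT :: "rat \<Rightarrow> sym2 \<Rightarrow> sym2" where
  "scaleT c F = (\<lambda>x. c * F x)"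

definition SI :: "nat list \<Rightarrow> sym" where
  "SI I = (\<lambda>J. if J = I then 1 else 0)"

definition one_sym :: sym where
  "one_sym = SI []"

definition Sn :: "nat \<Rightarrow> sym" where
  "Sn m = (if m = 0 then SI [] else SI [m])"

text \<open>product: bilinear extension of S^I S^J = S^(I@J)\<close>
definition mult :: "sym \<Rightarrow> sym \<Rightarrow> sym" where
  "mult F G = (\<lambda>K. \<Sum>i\<le>length K. F (take i K) * G (drop i K))"

definition Des :: "nat list \<Rightarrow> nat set" where
  "Des J = {sum_list (take i J) | i. 0 < i \<and> i < length J}"

text \<open>Ribbon functions, defined by solving the unitriangular system
  S^J = sum_{J' |= |J|, Des J' \<subseteq> Des J} R_J'
  recursively: R_J = S^J - sum_{Des J' strictly contained in Des J} R_J'.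
  (Des J' strictly contained in Des J forces length J' < length J, so fuel length J suffices.)\<close>
primrec ribbon_aux :: "nat \<Rightarrow> nat list \<Rightarrow> sym" where
  "ribbon_aux 0 J = SI J"
| "ribbon_aux (Suc k) J =
     SI J - (\<Sum>J'\<in>{J'\<in>comps (sum_list J). Des J' \<subset> Des J}. ribbon_aux k J')"

definition ribbon :: "nat list \<Rightarrow> sym" where
  "ribbon J = ribbon_aux (length J) J"

definition Lambda :: "nat \<Rightarrow> sym" where
  "Lambda k = ribbon (replicate k 1)"

definition tildeS :: "nat \<Rightarrow> sym" where
  "tildeS n = (\<Sum>k\<le>n. mult (Lambda k) (Sn (n - k)))"

definition thetaS :: "nat list \<Rightarrow> sym" where
  "thetaS I = foldr (\<lambda>i acc. mult (tildeS i) acc) I one_sym"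

text \<open>theta: the algebra endomorphism with S_n |-> tildeS_n, extended linearly\<close>
definition theta :: "sym \<Rightarrow> sym" where
  "theta F = (\<Sum>I\<in>{I. F I \<noteq> 0}. scaleS (F I) (thetaS I))"

definition HP :: "nat list \<Rightarrow> nat set" where
  "HP J = {a \<in> Des J. a \<noteq> 1 \<and> a - 1 \<notin> Des J}"

definition peak_sets :: "nat \<Rightarrow> nat set set" where
  "peak_sets n = {P. P \<subseteq> {2..n-1} \<and> (\<forall>a\<in>P. a - 1 \<notin> P)}"

definition Pi_class :: "nat \<Rightarrow> nat set \<Rightarrow> sym" where
  "Pi_class n P = (\<Sum>J\<in>{J \<in> comps n. HP J = P}. ribbon J)"

definition Pspace :: "nat \<Rightarrow> sym set" where
  "Pspace n = module.span scaleS (Pi_class n ` peak_sets n)"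

definition Pall :: "sym set" where
  "Pall = {F \<in> Sym. \<forall>n. hom_comp n F \<in> Pspace n}"

definition tensor :: "sym \<Rightarrow> sym \<Rightarrow> sym2" where
  "tensor u v = (\<lambda>(A, B). u A * v B)"

definition tmult :: "sym2 \<Rightarrow> sym2 \<Rightarrow> sym2" where
  "tmult F G = (\<lambda>(A, B). \<Sum>i\<le>length A. \<Sum>j\<le>length B.
      F (take i A, take j B) * G (drop i A, drop j B))"

primrec DeltaS :: "nat list \<Rightarrow> sym2" where
  "DeltaS [] = tensor one_sym one_sym"
| "DeltaS (i # I) = tmult (\<Sum>a\<le>i. tensor (Sn a) (Sn (i - a))) (DeltaS I)"

definition Delta :: "sym \<Rightarrow> sym2" where
  "Delta F = (\<Sum>I\<in>{I. F I \<noteq> 0}. scaleT (F I) (DeltaS I))"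

definition tensor_sq :: "sym set \<Rightarrow> sym2 set" where
  "tensor_sq V = module.span scaleT {tensor u v | u v. u \<in> V \<and> v \<in> V}"

fun fib_f :: "nat \<Rightarrow> nat" where
  "fib_f 0 = 1"
| "fib_f (Suc 0) = 1"
| "fib_f (Suc (Suc 0)) = 1"
| "fib_f (Suc (Suc (Suc n))) = fib_f (Suc (Suc n)) + fib_f (Suc n)"

end

theory Submission
  imports Defs
begin


lemma sum_fun_apply: "(sum f A) x = (\<Sum>i\<in>A. f i x)"
  by (induct A rule: infinite_finite_induct) auto

lemma comps_length: "0 \<notin> set I \<Longrightarrow> length I \<le> sum_list I"
proof (induct I)
  case (Cons a I) then show ?case by (cases a) auto
qed auto

lemma finite_comps: "finite (comps n)"
proof -
  have "comps n \<subseteq> {xs. set xs \<subseteq> {..n} \<and> length xs \<le> n}"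
    using comps_length member_le_sum_list by (fastforce simp: comps_def)
  moreover have "finite {xs. set xs \<subseteq> {..n} \<and> length xs \<le> n}"
    by (rule finite_lists_length_le) auto
  ultimately show ?thesis by (rule finite_subset)
qed

lemma sum_list_0_iff: "0 \<notin> set (I::nat list) \<Longrightarrow> sum_list I = 0 \<longleftrightarrow> I = []"
  by (cases I) auto

lemma comps_0: "comps 0 = {[]}"
  using sum_list_0_iff by (auto simp: comps_def)

lemma comps_Nil_iff: "I \<in> comps n \<Longrightarrow> I = [] \<longleftrightarrow> n = 0"
  using sum_list_0_iff by (auto simp: comps_def)

lemma comps_Cons: "a # I \<in> comps n \<longleftrightarrow> 0 < a \<and> a \<le> n \<and> I \<in> comps (n - a)"
  by (auto simp: comps_def)

lemma comps_append: "I \<in> comps m \<Longrightarrow> J \<in> comps k \<Longrightarrow> I @ J \<in> comps (m + k)"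
  by (auto simp: comps_def)

lemma Des_Nil[simp]: "Des [] = {}" by (simp add: Des_def)

lemma Des_Cons_aux: "Des (a # J) = {a + sum_list (take j J) | j. j < length J}"
  unfolding Des_def
proof (intro set_eqI iffI)
  fix x assume "x \<in> {sum_list (take i (a # J)) |i. 0 < i \<and> i < length (a # J)}"
  then obtain i where i: "x = sum_list (take i (a # J))" "0 < i" "i < length (a # J)" by blast
  then obtain j where "i = Suc j" by (cases i) auto
  with i show "x \<in> {a + sum_list (take j J) |j. j < length J}" by auto
next
  fix x assume "x \<in> {a + sum_list (take j J) |j. j < length J}"
  then obtain j where j: "x = a + sum_list (take j J)" "j < length J" by blast
  then show "x \<in> {sum_list (take i (a # J)) |i. 0 < i \<and> i < length (a # J)}"
    by (intro CollectI exI[of _ "Suc j"]) auto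
qed

lemma Des_Cons: "Des (a # J) = (if J = [] then {} else insert a ((+) a ` Des J))"
proof (cases "J = []")
  case True then show ?thesis by (simp add: Des_Cons_aux)
next
  case False
  have "{a + sum_list (take j J) | j. j < length J} = insert a ((+) a ` Des J)"
  proof (intro set_eqI iffI)
    fix x assume "x \<in> {a + sum_list (take j J) | j. j < length J}"
    then obtain j where j: "x = a + sum_list (take j J)" "j < length J" by blast
    show "x \<in> insert a ((+) a ` Des J)"
    proof (cases "j = 0")
      case True then show ?thesis using j by simp
    next
      case False then show ?thesis using j unfolding Des_def by auto
    qed
  next
    fix x assume "x \<in> insert a ((+) a ` Des J)"
    then show "x \<in> {a + sum_list (take j J) | j. j < length J}"
      using False unfolding Des_def by (auto intro: exI[of _ 0] simp: not_less)
  qed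
  then show ?thesis using False by (simp add: Des_Cons_aux)
qed

lemma Des_single[simp]: "Des [a] = {}" by (simp add: Des_Cons)

lemma Des_append: "Des (I @ J) = Des I \<union> (+) (sum_list I) ` Des J \<union>
   (if I \<noteq> [] \<and> J \<noteq> [] then {sum_list I} else {})"
proof (induct I)
  case Nil then show ?case by simp
next
  case (Cons a I)
  show ?case
  proof (cases "I = []")
    case True then show ?thesis by (auto simp: Des_Cons)
  next
    case False
    then show ?thesis using Cons by (auto simp: Des_Cons image_Un image_image add.assoc)
  qed
qed

lemma Des_subset: "0 \<notin> set I \<Longrightarrow> Des I \<subseteq> {1..<sum_list I}"
proof (induct I)
  case (Cons a I)
  show ?case
  proof (cases "I = []")
    case False
    then have "sum_list I > 0" using Cons by (cases I) auto
    then show ?thesis using Cons by (auto simp: Des_Cons)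
  qed (simp add: Des_Cons)
qed simp

lemma Des_subset_comps: "I \<in> comps n \<Longrightarrow> Des I \<subseteq> {1..<n}"
  using Des_subset by (auto simp: comps_def)

lemma finite_Des[simp]: "finite (Des I)"
proof (induct I)
  case (Cons a I) then show ?case by (simp add: Des_Cons)
qed simp

lemma card_Des: "0 \<notin> set I \<Longrightarrow> card (Des I) = length I - 1"
proof (induct I)
  case (Cons a I)
  show ?case
  proof (cases "I = []")
    case False
    have "0 \<notin> Des I" using Des_subset[of I] Cons by auto
    then have "a \<notin> (+) a ` Des I" by auto
    then have "card (Des (a # I)) = Suc (card ((+) a ` Des I))"
      using False by (simp add: Des_Cons)
    also have "\<dots> = Suc (card (Des I))" by (simp add: card_image)
    finally show ?thesis using Cons False by (cases I) auto
  qed (simp add: Des_Cons)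
qed simp

lemma Des_inj: "I \<in> comps n \<Longrightarrow> J \<in> comps n \<Longrightarrow> Des I = Des J \<Longrightarrow> I = J"
proof (induct I arbitrary: J n)
  case Nil then show ?case using comps_0 comps_Nil_iff by auto
next
  case (Cons a I)
  have n: "n > 0" using Cons(2) by (auto simp: comps_def)
  then obtain b J' where J: "J = b # J'" using Cons(3) by (cases J) (auto simp: comps_def)
  show ?case
  proof (cases "I = []")
    case True
    then have "Des J = {}" using Cons by (simp add: Des_Cons)
    then have "J' = []" using J by (auto simp: Des_Cons split: if_splits)
    then show ?thesis using True J Cons by (auto simp: comps_def)
  next
    case False
    then have "Des (a # I) \<noteq> {}" by (simp add: Des_Cons)
    then have "Des J \<noteq> {}" using Cons(4) by simp
    then have J'ne: "J' \<noteq> []" using J by (auto simp: Des_Cons)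
    have I0: "0 \<notin> Des I" using Des_subset[of I] Cons by (auto simp: comps_def)
    have J0: "0 \<notin> Des J'" using Des_subset[of J'] Cons J by (auto simp: comps_def)
    have eq: "insert a ((+) a ` Des I) = insert b ((+) b ` Des J')"
      using Cons(4) J False J'ne by (simp add: Des_Cons)
    have "a = b"
    proof (rule ccontr)
      assume "a \<noteq> b"
      have "a \<in> insert b ((+) b ` Des J')" "b \<in> insert a ((+) a ` Des I)" using eq by blast+
      then have "a \<in> (+) b ` Des J'" "b \<in> (+) a ` Des I" using \<open>a \<noteq> b\<close> by auto
      then show False using I0 J0 by auto
    qed
    have n1: "a \<notin> (+) a ` Des I" using I0 by auto
    have n2: "a \<notin> (+) a ` Des J'" using J0 by auto
    have "(+) a ` Des I = (+) a ` Des J'"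
      using eq \<open>a = b\<close> insert_ident[OF n1 n2] by simp
    moreover have "inj ((+) a)" by (simp add: inj_def)
    ultimately have "Des I = Des J'" by (simp add: inj_image_eq_iff)
    moreover have "I \<in> comps (n - a)" "J' \<in> comps (n - a)" using Cons J \<open>a = b\<close> by (auto simp: comps_Cons)
    ultimately have "I = J'" using Cons by blast
    then show ?thesis using J \<open>a = b\<close> by simp
  qed
qed

lemma Des_surj: "D \<subseteq> {1..<n} \<Longrightarrow> \<exists>J\<in>comps n. Des J = D"
proof (induct n arbitrary: D rule: less_induct)
  case (less n)
  show ?case
  proof (cases "n = 0")
    case True then show ?thesis using less by (auto simp: comps_0)
  next
    case n: False
    show ?thesis
    proof (cases "D = {}")
      case True then show ?thesis using n by (intro bexI[of _ "[n]"]) (auto simp: comps_def)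
    next
      case False
      have fin: "finite D" using less(2) finite_subset by blast
      define a where "a = Min D"
      have aD: "a \<in> D" using False fin by (simp add: a_def)
      have amin: "\<And>x. x \<in> D \<Longrightarrow> a \<le> x" using fin by (simp add: a_def)
      have a1: "1 \<le> a" "a < n" using aD less(2) by auto
      define D' where "D' = (\<lambda>x. x - a) ` (D - {a})"
      have "D' \<subseteq> {1..<n - a}"
        unfolding D'_def using less(2) amin by force
      then obtain J' where J': "J' \<in> comps (n - a)" "Des J' = D'" using less(1)[of "n - a"] a1 by auto
      have J'ne: "J' \<noteq> []" using J' a1 by (auto simp: comps_def)
      have "(+) a ` D' = D - {a}"
        unfolding D'_def image_image using amin
        by (force simp: image_iff)
      then have "Des (a # J') = D" using J' J'ne aD by (auto simp: Des_Cons)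
      moreover have "a # J' \<in> comps n" using J' a1 by (auto simp: comps_Cons)
      ultimately show ?thesis by blast
    qed
  qed
qed

lemma Des_bij: "bij_betw Des (comps n) (Pow {1..<n})"
proof -
  have "inj_on Des (comps n)" by (rule inj_onI) (rule Des_inj)
  moreover have "Des ` comps n \<subseteq> Pow {1..<n}" using Des_subset_comps by auto
  moreover have "Pow {1..<n} \<subseteq> Des ` comps n"
  proof
    fix D assume "D \<in> Pow {1..<n}"
    then obtain J where "J \<in> comps n" "Des J = D" using Des_surj by blast
    then show "D \<in> Des ` comps n" by blast
  qed
  ultimately show ?thesis unfolding bij_betw_def by blast
qed


lemma Sym_deg_zero[simp]: "0 \<in> Sym_deg n" by (simp add: Sym_deg_def)

lemma Sym_deg_add: "F \<in> Sym_deg n \<Longrightarrow> G \<in> Sym_deg n \<Longrightarrow> F + G \<in> Sym_deg n"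
  by (auto simp: Sym_deg_def) (metis add.right_neutral)

lemma Sym_deg_diff: "F \<in> Sym_deg n \<Longrightarrow> G \<in> Sym_deg n \<Longrightarrow> F - G \<in> Sym_deg n"
  by (auto simp: Sym_deg_def) (metis diff_zero)

lemma Sym_deg_scale: "F \<in> Sym_deg n \<Longrightarrow> scaleS c F \<in> Sym_deg n"
  by (auto simp: Sym_deg_def scaleS_def)

lemma Sym_deg_sum: "(\<And>i. i \<in> A \<Longrightarrow> f i \<in> Sym_deg n) \<Longrightarrow> sum f A \<in> Sym_deg n"
  by (induct A rule: infinite_finite_induct) (auto intro: Sym_deg_add)

lemma Sym_deg_SI: "J \<in> comps n \<Longrightarrow> SI J \<in> Sym_deg n"
  by (auto simp: Sym_deg_def SI_def)

lemma Sym_deg_supp: "F \<in> Sym_deg n \<Longrightarrow> {I. F I \<noteq> 0} \<subseteq> comps n"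
  by (auto simp: Sym_deg_def)

lemma Sym_deg_finite: "F \<in> Sym_deg n \<Longrightarrow> finite {I. F I \<noteq> 0}"
  using Sym_deg_supp finite_comps finite_subset by blast

lemma Sym_deg_Sym: "F \<in> Sym_deg n \<Longrightarrow> F \<in> Sym"
  using Sym_deg_finite by (auto simp: Sym_def Sym_deg_def comps_def)

section \<open>Ribbon coordinates\<close>

definition rho :: "nat \<Rightarrow> sym \<Rightarrow> nat set \<Rightarrow> rat" where
  "rho n F D = (\<Sum>I\<in>{I\<in>comps n. D \<subseteq> Des I}. F I)"

lemma finite_comps_filter[simp]: "finite {I\<in>comps n. P I}"
  using finite_comps by simp

lemma rho_add: "rho n (F + G) D = rho n F D + rho n G D"
  by (simp add: rho_def sum.distrib)

lemma rho_diff: "rho n (F - G) D = rho n F D - rho n G D"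
  by (simp add: rho_def sum_subtractf)

lemma rho_scale: "rho n (scaleS c F) D = c * rho n F D"
  by (simp add: rho_def scaleS_def sum_distrib_left)

lemma rho_zero: "rho n 0 D = 0"
  by (simp add: rho_def)

lemma rho_sum: "rho n (sum f A) D = (\<Sum>i\<in>A. rho n (f i) D)"
  unfolding rho_def sum_fun_apply by (rule sum.swap)

lemma rho_SI: "J \<in> comps n \<Longrightarrow> rho n (SI J) D = (if D \<subseteq> Des J then 1 else 0)"
  unfolding rho_def SI_def by (simp add: sum.delta')

lemma rho_inj:
  assumes F: "F \<in> Sym_deg n" and z: "\<And>D. D \<subseteq> {1..<n} \<Longrightarrow> rho n F D = 0"
  shows "F = 0"
proof (rule ccontr)
  assume "F \<noteq> 0"
  define S where "S = {I. F I \<noteq> 0}"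
  have Ssub: "S \<subseteq> comps n" using F by (auto simp: S_def Sym_deg_def)
  have finS: "finite S" using Ssub finite_comps finite_subset by blast
  have "S \<noteq> {}" using \<open>F \<noteq> 0\<close> by (auto simp: S_def fun_eq_iff)
  define m where "m = Max (length ` S)"
  have "m \<in> length ` S" unfolding m_def using finS \<open>S \<noteq> {}\<close> by (intro Max_in) auto
  then obtain I where I: "I \<in> S" "length I = m" by auto
  have Imax: "\<And>J. J \<in> S \<Longrightarrow> length J \<le> length I"
    using I finS by (auto simp: m_def)
  have Ic: "I \<in> comps n" using I Ssub by auto
  have rest: "F J = 0" if J: "J \<in> {J\<in>comps n. Des I \<subseteq> Des J} - {I}" for J
  proof -
    have Jc: "J \<in> comps n" "Des I \<subseteq> Des J" "J \<noteq> I" using J by auto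
    then have "Des I \<noteq> Des J" using Des_inj Ic by blast
    then have "Des I \<subset> Des J" using Jc by blast
    then have "card (Des I) < card (Des J)" by (simp add: psubset_card_mono)
    then have "length I < length J"
      using card_Des[of I] card_Des[of J] Ic Jc by (auto simp: comps_def)
    then have "J \<notin> S" using Imax by force
    then show ?thesis by (simp add: S_def)
  qed
  have "rho n F (Des I) = F I + (\<Sum>J\<in>{J\<in>comps n. Des I \<subseteq> Des J} - {I}. F J)"
    unfolding rho_def by (rule sum.remove) (use Ic in auto)
  also have "\<dots> = F I" using rest by simp
  finally have "rho n F (Des I) = F I" .
  moreover have "rho n F (Des I) = 0" using z Des_subset_comps[OF Ic] by blast
  ultimately show False using I by (simp add: S_def)
qed

lemma rho_eqI:
  assumes "F \<in> Sym_deg n" "G \<in> Sym_deg n" "\<And>D. D \<subseteq> {1..<n} \<Longrightarrow> rho n F D = rho n G D"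
  shows "F = G"
proof -
  have "F - G = 0" using assms by (intro rho_inj[of "F - G" n]) (auto simp: Sym_deg_diff rho_diff)
  then show ?thesis by simp
qed

definition splits :: "nat list \<Rightarrow> (nat list \<times> nat list) set" where
  "splits K = {(U, V). U @ V = K}"

lemma splits_eq: "splits K = (\<lambda>i. (take i K, drop i K)) ` {..length K}"
proof (intro set_eqI iffI)
  fix p assume "p \<in> splits K"
  then obtain U V where p: "p = (U, V)" "U @ V = K" by (auto simp: splits_def)
  then show "p \<in> (\<lambda>i. (take i K, drop i K)) ` {..length K}"
    by (intro image_eqI[where x="length U"]) auto
qed (auto simp: splits_def)

lemma finite_splits[simp]: "finite (splits K)"
  by (simp add: splits_eq)

lemma mult_splits: "mult F G K = (\<Sum>p\<in>splits K. F (fst p) * G (snd p))"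
proof -
  have "inj_on (\<lambda>i. (take i K, drop i K)) {..length K}"
    by (rule inj_onI) (metis atMost_iff length_take min.absorb2 prod.inject)
  then show ?thesis unfolding mult_def splits_eq by (simp add: sum.reindex)
qed

lemma mult_repr:
  assumes "finite A" "finite B" "{I. F I \<noteq> 0} \<subseteq> A" "{J. G J \<noteq> 0} \<subseteq> B"
  shows "mult F G = (\<Sum>p\<in>A \<times> B. scaleS (F (fst p) * G (snd p)) (SI (fst p @ snd p)))"
proof
  fix K
  have "mult F G K = (\<Sum>p\<in>splits K \<inter> (A \<times> B). F (fst p) * G (snd p))"
    unfolding mult_splits by (rule sum.mono_neutral_right) (use assms in auto)
  also have "\<dots> = (\<Sum>p\<in>{p \<in> A \<times> B. K = fst p @ snd p}. F (fst p) * G (snd p))"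
    by (rule sum.cong) (auto simp: splits_def)
  also have "\<dots> = (\<Sum>p\<in>A \<times> B. if K = fst p @ snd p then F (fst p) * G (snd p) else 0)"
    using assms by (simp add: sum.inter_filter)
  also have "\<dots> = (\<Sum>p\<in>A \<times> B. F (fst p) * G (snd p) * (if K = fst p @ snd p then 1 else 0))"
    by (rule sum.cong) auto
  also have "\<dots> = (\<Sum>p\<in>A \<times> B. scaleS (F (fst p) * G (snd p)) (SI (fst p @ snd p))) K"
    by (simp add: sum_fun_apply scaleS_def SI_def)
  finally show "mult F G K = \<dots>" .
qed

lemma mult_add_left: "mult (F + G) H = mult F H + mult G H"
  by (simp add: mult_def fun_eq_iff algebra_simps sum.distrib)

lemma mult_add_right: "mult F (G + H) = mult F G + mult F H"
  by (simp add: mult_def fun_eq_iff algebra_simps sum.distrib)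

lemma mult_diff_left: "mult (F - G) H = mult F H - mult G H"
  by (simp add: mult_def fun_eq_iff algebra_simps sum_subtractf)

lemma mult_diff_right: "mult F (G - H) = mult F G - mult F H"
  by (simp add: mult_def fun_eq_iff algebra_simps sum_subtractf)

lemma mult_scale_left: "mult (scaleS c F) G = scaleS c (mult F G)"
  by (simp add: mult_def scaleS_def fun_eq_iff sum_distrib_left mult.assoc)

lemma mult_scale_right: "mult F (scaleS c G) = scaleS c (mult F G)"
  by (simp add: mult_def scaleS_def fun_eq_iff sum_distrib_left mult.left_commute)

lemma mult_zero_left[simp]: "mult 0 G = 0"
  by (simp add: mult_def fun_eq_iff)

lemma mult_zero_right[simp]: "mult F 0 = 0"
  by (simp add: mult_def fun_eq_iff)

lemma mult_sum_left: "mult (sum f A) G = (\<Sum>i\<in>A. mult (f i) G)"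
proof (cases "finite A")
  case False then show ?thesis by (simp only: sum.infinite[OF False] mult_zero_left)
next
  case True then show ?thesis
  proof (induct A)
    case (insert x F) then show ?case by (simp only: sum.insert[OF insert(1,2)] mult_add_left)
  qed (simp only: sum.empty mult_zero_left)
qed

lemma mult_sum_right: "mult G (sum f A) = (\<Sum>i\<in>A. mult G (f i))"
proof (cases "finite A")
  case False then show ?thesis by (simp only: sum.infinite[OF False] mult_zero_right)
next
  case True then show ?thesis
  proof (induct A)
    case (insert x F) then show ?case by (simp only: sum.insert[OF insert(1,2)] mult_add_right)
  qed (simp only: sum.empty mult_zero_right)
qed

lemma mult_one_left[simp]: "mult one_sym F = F"
proof
  fix K
  have "mult one_sym F K = (\<Sum>i\<le>length K. if i = 0 then F (drop i K) else 0)"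
    unfolding mult_def one_sym_def by (rule sum.cong) (auto simp: SI_def)
  then show "mult one_sym F K = F K" by simp
qed

lemma mult_one_right[simp]: "mult F one_sym = F"
proof
  fix K
  have "mult F one_sym K = (\<Sum>i\<le>length K. if i = length K then F (take i K) else 0)"
    unfolding mult_def one_sym_def by (rule sum.cong) (auto simp: SI_def)
  then show "mult F one_sym K = F K" by simp
qed

lemma tri_sum: "(\<Sum>j\<le>(n::nat). \<Sum>i\<le>j. f i j) = (\<Sum>i\<le>n. \<Sum>l\<le>n-i. f i (i+l))"
proof -
  have "(\<Sum>j\<le>n. \<Sum>i\<le>j. f i j) = (\<Sum>(j,i)\<in>(SIGMA j:{..n}. {..j}). f i j)"
    by (rule sum.Sigma) simp_all
  also have "\<dots> = (\<Sum>(i,l)\<in>(SIGMA i:{..n}. {..n-i}). f i (i+l))"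
    by (rule sum.reindex_bij_witness[where i="\<lambda>(i,l). (i+l, i)" and j="\<lambda>(j,i). (i, j-i)"]) auto
  also have "\<dots> = (\<Sum>i\<le>n. \<Sum>l\<le>n-i. f i (i+l))"
    by (rule sum.Sigma[symmetric]) simp_all
  finally show ?thesis .
qed

lemma mult_assoc: "mult (mult F G) H = mult F (mult G H)"
proof
  fix K :: "nat list"
  define n where "n = length K"
  have "mult (mult F G) H K = (\<Sum>j\<le>n. \<Sum>i\<le>j. F (take i K) * G (drop i (take j K)) * H (drop j K))"
    unfolding mult_def n_def
    by (rule sum.cong) (auto simp: sum_distrib_right min_absorb1 intro!: sum.cong)
  also have "\<dots> = (\<Sum>i\<le>n. \<Sum>l\<le>n-i. F (take i K) * G (drop i (take (i+l) K)) * H (drop (i+l) K))"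
    by (rule tri_sum)
  also have "\<dots> = mult F (mult G H) K"
    unfolding mult_def n_def
    by (rule sum.cong) (auto simp: sum_distrib_left drop_take add.commute mult.assoc intro!: sum.cong)
  finally show "mult (mult F G) H K = mult F (mult G H) K" .
qed

lemma mult_Sym_deg:
  assumes F: "F \<in> Sym_deg m" and G: "G \<in> Sym_deg k"
  shows "mult F G \<in> Sym_deg (m + k)"
  unfolding Sym_deg_def
proof (intro CollectI allI impI)
  fix K assume "mult F G K \<noteq> 0"
  then obtain i where "F (take i K) * G (drop i K) \<noteq> 0"
    unfolding mult_def by (meson sum.not_neutral_contains_not_neutral)
  then have "take i K \<in> comps m" "drop i K \<in> comps k" using F G by (auto simp: Sym_deg_def)
  then show "K \<in> comps (m + k)" using comps_append by fastforce
qed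

section \<open>Product formula in ribbon coordinates\<close>

definition lft :: "nat \<Rightarrow> nat set \<Rightarrow> nat set" where
  "lft m C = {x\<in>C. x < m}"

definition rgt :: "nat \<Rightarrow> nat set \<Rightarrow> nat set" where
  "rgt m C = (\<lambda>x. x - m) ` {x\<in>C. m < x}"

lemma Des_append_split:
  assumes I: "I \<in> comps m" and J: "J \<in> comps k" and C: "C \<subseteq> {1..<m+k}"
  shows "C \<subseteq> Des (I @ J) \<longleftrightarrow> lft m C \<subseteq> Des I \<and> rgt m C \<subseteq> Des J"
proof -
  have sI: "sum_list I = m" using I by (simp add: comps_def)
  have DI: "Des I \<subseteq> {1..<m}" using Des_subset_comps[OF I] .
  have DJ: "Des J \<subseteq> {1..<k}" using Des_subset_comps[OF J] .
  have DA: "Des (I @ J) = Des I \<union> (+) m ` Des J \<union> (if I \<noteq> [] \<and> J \<noteq> [] then {m} else {})"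
    using Des_append[of I J] sI by simp
  show ?thesis
  proof
    assume sub: "C \<subseteq> Des (I @ J)"
    have "lft m C \<subseteq> Des I"
    proof
      fix x assume "x \<in> lft m C"
      then have "x \<in> C" "x < m" by (auto simp: lft_def)
      then show "x \<in> Des I" using sub DA by (auto split: if_splits)
    qed
    moreover have "rgt m C \<subseteq> Des J"
    proof
      fix y assume "y \<in> rgt m C"
      then obtain x where x: "x \<in> C" "m < x" "y = x - m" by (auto simp: rgt_def)
      then have "x \<in> (+) m ` Des J" using sub DA DI by (auto split: if_splits)
      then show "y \<in> Des J" using x by auto
    qed
    ultimately show "lft m C \<subseteq> Des I \<and> rgt m C \<subseteq> Des J" ..
  next
    assume H: "lft m C \<subseteq> Des I \<and> rgt m C \<subseteq> Des J"
    show "C \<subseteq> Des (I @ J)"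
    proof
      fix x assume x: "x \<in> C"
      consider "x < m" | "x = m" | "m < x" by linarith
      then show "x \<in> Des (I @ J)"
      proof cases
        case 1 then show ?thesis using H x DA by (auto simp: lft_def)
      next
        case 2
        then have "m > 0" "k > 0" using x C by auto
        then have "I \<noteq> []" "J \<noteq> []" using comps_Nil_iff I J by auto
        then show ?thesis using DA 2 by simp
      next
        case 3
        then have "x - m \<in> Des J" using H x by (auto simp: rgt_def)
        then have "x \<in> (+) m ` Des J" using 3 by (auto intro: image_eqI[where x="x - m"])
        then show ?thesis using DA by simp
      qed
    qed
  qed
qed

lemma rho_mult:
  assumes F: "F \<in> Sym_deg m" and G: "G \<in> Sym_deg k" and C: "C \<subseteq> {1..<m+k}"
  shows "rho (m+k) (mult F G) C = rho m F (lft m C) * rho k G (rgt m C)"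
proof -
  have "mult F G = (\<Sum>p\<in>comps m \<times> comps k. scaleS (F (fst p) * G (snd p)) (SI (fst p @ snd p)))"
    by (rule mult_repr) (use F G Sym_deg_supp finite_comps in auto)
  then have "rho (m+k) (mult F G) C = (\<Sum>p\<in>comps m \<times> comps k. F (fst p) * G (snd p) * rho (m+k) (SI (fst p @ snd p)) C)"
    by (simp add: rho_sum rho_scale)
  also have "\<dots> = (\<Sum>p\<in>comps m \<times> comps k. (if lft m C \<subseteq> Des (fst p) then F (fst p) else 0) * (if rgt m C \<subseteq> Des (snd p) then G (snd p) else 0))"
    by (rule sum.cong) (auto simp: rho_SI comps_append Des_append_split[OF _ _ C] split: if_splits)
  also have "\<dots> = (\<Sum>I\<in>comps m. if lft m C \<subseteq> Des I then F I else 0) * (\<Sum>J\<in>comps k. if rgt m C \<subseteq> Des J then G J else 0)"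
    by (simp add: sum_product sum.cartesian_product case_prod_beta)
  also have "\<dots> = rho m F (lft m C) * rho k G (rgt m C)"
    unfolding rho_def by (simp add: sum.inter_filter finite_comps)
  finally show ?thesis .
qed



interpretation VS: vector_space scaleS
  by unfold_locales (auto simp: scaleS_def fun_eq_iff algebra_simps)

interpretation VT: vector_space scaleT
  by unfold_locales (auto simp: scaleT_def fun_eq_iff algebra_simps)

lemma ribbon_aux_props:
  assumes "J \<in> comps n" "card (Des J) \<le> k"
  shows "ribbon_aux k J \<in> Sym_deg n \<and>
    (\<forall>D. D \<subseteq> {1..<n} \<longrightarrow> rho n (ribbon_aux k J) D = (if D = Des J then 1 else 0))"
  using assms
proof (induct k arbitrary: J)
  case 0
  then have "Des J = {}" by simp
  then show ?case using 0 by (auto simp: Sym_deg_SI rho_SI)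
next
  case (Suc k)
  have sJ: "sum_list J = n" using Suc(2) by (simp add: comps_def)
  define A where "A = {J'\<in>comps n. Des J' \<subset> Des J}"
  have IH: "ribbon_aux k J' \<in> Sym_deg n \<and>
    (\<forall>D. D \<subseteq> {1..<n} \<longrightarrow> rho n (ribbon_aux k J') D = (if D = Des J' then 1 else 0))"
    if "J' \<in> A" for J'
  proof -
    have "card (Des J') < card (Des J)" using that by (simp add: A_def psubset_card_mono)
    then show ?thesis using Suc that by (auto simp: A_def)
  qed
  have r: "ribbon_aux (Suc k) J = SI J - sum (ribbon_aux k) A" by (simp add: A_def sJ)
  have "ribbon_aux (Suc k) J \<in> Sym_deg n"
    unfolding r using IH Suc(2) by (intro Sym_deg_diff Sym_deg_SI Sym_deg_sum) auto
  moreover have "rho n (ribbon_aux (Suc k) J) D = (if D = Des J then 1 else 0)"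
    if D: "D \<subseteq> {1..<n}" for D
  proof -
    have "rho n (ribbon_aux (Suc k) J) D = rho n (SI J) D - (\<Sum>J'\<in>A. rho n (ribbon_aux k J') D)"
      unfolding r by (simp add: rho_diff rho_sum)
    also have "\<dots> = (if D \<subseteq> Des J then 1 else 0) - (\<Sum>J'\<in>A. if D = Des J' then 1 else 0)"
      using IH D Suc(2) by (simp add: rho_SI)
    also have "(\<Sum>J'\<in>A. if D = Des J' then 1 else 0) = (if D \<subset> Des J then 1 else (0::rat))"
    proof (cases "D \<subset> Des J")
      case True
      obtain J0 where J0: "J0 \<in> comps n" "Des J0 = D" using Des_surj D by blast
      then have J0A: "J0 \<in> A" using True by (simp add: A_def)
      have "(\<Sum>J'\<in>A. if D = Des J' then 1 else 0) = (\<Sum>J'\<in>A. if J' = J0 then 1 else (0::rat))"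
        by (rule sum.cong) (use J0 Des_inj A_def in auto)
      also have "\<dots> = 1" using J0A by (simp add: sum.delta' A_def)
      finally show ?thesis using True by simp
    next
      case False
      then have "(\<Sum>J'\<in>A. if D = Des J' then 1 else (0::rat)) = 0"
        by (intro sum.neutral) (auto simp: A_def)
      then show ?thesis using False by simp
    qed
    finally have "rho n (ribbon_aux (Suc k) J) D = (if D \<subseteq> Des J then 1 else 0) - (if D \<subset> Des J then 1 else 0)" .
    moreover have "(if D \<subseteq> Des J then 1 else 0) - (if D \<subset> Des J then 1 else 0) = (if D = Des J then 1 else (0::rat))"
      by (cases "D = Des J"; cases "D \<subseteq> Des J") auto
    ultimately show ?thesis by simp
  qed
  ultimately show ?case by blast
qed

lemma card_Des_le: "J \<in> comps n \<Longrightarrow> card (Des J) \<le> length J"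
  using card_Des[of J] by (auto simp: comps_def)

lemma ribbon_Sym_deg: "J \<in> comps n \<Longrightarrow> ribbon J \<in> Sym_deg n"
  unfolding ribbon_def using ribbon_aux_props card_Des_le by blast

lemma rho_ribbon: "J \<in> comps n \<Longrightarrow> D \<subseteq> {1..<n} \<Longrightarrow> rho n (ribbon J) D = (if D = Des J then 1 else 0)"
  unfolding ribbon_def using ribbon_aux_props card_Des_le by blast

lemma ribbon_Nil: "ribbon [] = one_sym"
  by (simp add: ribbon_def one_sym_def)

lemma Des_replicate: "Des (replicate k 1) = {1..<k}"
proof (induct k)
  case (Suc k)
  show ?case
  proof (cases "k = 0")
    case False
    have "(+) 1 ` {1..<k} = {2..<Suc k}"
      by (auto simp: image_iff intro!: bexI[where x="_ - 1"])
    then show ?thesis using Suc False by (auto simp: Des_Cons)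
  qed simp
qed simp

lemma replicate_comps: "replicate k 1 \<in> comps k"
  by (simp add: comps_def sum_list_replicate)

lemma Lambda_Sym_deg: "Lambda k \<in> Sym_deg k"
  unfolding Lambda_def using replicate_comps by (rule ribbon_Sym_deg)

lemma rho_Lambda: "D \<subseteq> {1..<k} \<Longrightarrow> rho k (Lambda k) D = (if D = {1..<k} then 1 else 0)"
  unfolding Lambda_def using replicate_comps rho_ribbon Des_replicate by simp

lemma Lambda_0: "Lambda 0 = one_sym"
  by (simp add: Lambda_def ribbon_Nil)

lemma Sn_0: "Sn 0 = one_sym"
  by (simp add: Sn_def one_sym_def)

lemma Sn_comps: "Sn j = SI (if j = 0 then [] else [j])" "(if j = 0 then [] else [j]) \<in> comps j"
  by (auto simp: Sn_def comps_def)

lemma Sn_Sym_deg: "Sn j \<in> Sym_deg j"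
  using Sn_comps Sym_deg_SI by metis

lemma rho_Sn: "rho j (Sn j) D = (if D = {} then 1 else 0)"
proof -
  have "rho j (Sn j) D = (if D \<subseteq> Des (if j = 0 then [] else [j]) then 1 else 0)"
    using Sn_comps rho_SI by metis
  then show ?thesis by simp
qed

lemma one_Sym_deg: "one_sym \<in> Sym_deg 0"
  by (simp add: one_sym_def Sym_deg_SI comps_0)

section \<open>Peaks\<close>

definition HPs :: "nat set \<Rightarrow> nat set" where
  "HPs C = {a \<in> C. a \<noteq> 1 \<and> a - 1 \<notin> C}"

lemma HP_HPs: "HP J = HPs (Des J)"
  by (simp add: HP_def HPs_def)

lemma lft_sub: assumes "C \<subseteq> {1..<n}" shows "lft m C \<subseteq> {1..<m}"
  using assms by (auto simp: lft_def)

lemma rgt_sub: assumes "C \<subseteq> {1..<n}" shows "rgt m C \<subseteq> {1..<n - m}"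
proof
  fix y assume "y \<in> rgt m C"
  then obtain x where "x \<in> C" "m < x" "y = x - m" by (auto simp: rgt_def)
  moreover have "x < n" using assms \<open>x \<in> C\<close> by auto
  ultimately show "y \<in> {1..<n - m}" by auto
qed

lemma HPs_lft: "HPs (lft m C) = lft m (HPs C)"
  by (auto simp: HPs_def lft_def)

lemma HPs_rgt: "HPs (rgt m C) = rgt m {a \<in> HPs C. Suc m < a}"
proof (intro set_eqI iffI)
  fix b assume "b \<in> HPs (rgt m C)"
  then have b: "b \<in> rgt m C" "b \<noteq> 1" "b - 1 \<notin> rgt m C" by (auto simp: HPs_def)
  then obtain x where x: "x \<in> C" "m < x" "b = x - m" by (auto simp: rgt_def)
  have "x - 1 \<notin> C"
  proof
    assume "x - 1 \<in> C"
    moreover have "m < x - 1" using x b by auto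
    ultimately have "b - 1 \<in> rgt m C" using x unfolding rgt_def
      by (intro image_eqI[where x="x - 1"]) auto
    then show False using b by simp
  qed
  then show "b \<in> rgt m {a \<in> HPs C. Suc m < a}"
    using x b unfolding rgt_def HPs_def by (intro image_eqI[where x=x]) auto
next
  fix b assume "b \<in> rgt m {a \<in> HPs C. Suc m < a}"
  then obtain x where x: "x \<in> C" "x - 1 \<notin> C" "Suc m < x" "b = x - m"
    by (auto simp: rgt_def HPs_def)
  have "b - 1 \<notin> rgt m C"
  proof
    assume "b - 1 \<in> rgt m C"
    then obtain y where "y \<in> C" "m < y" "b - 1 = y - m" by (auto simp: rgt_def)
    then have "y = x - 1" using x by auto
    then show False using x \<open>y \<in> C\<close> by simp
  qed
  moreover have "b \<in> rgt m C" using x unfolding rgt_def by auto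
  ultimately show "b \<in> HPs (rgt m C)" using x by (auto simp: HPs_def)
qed

lemma HPs_peak: assumes "C \<subseteq> {1..<n}" shows "HPs C \<in> peak_sets n"
proof -
  have "HPs C \<subseteq> {2..n-1}"
  proof
    fix x assume "x \<in> HPs C"
    then have "x \<in> C" "x \<noteq> 1" by (auto simp: HPs_def)
    moreover then have "1 \<le> x" "x < n" using assms by auto
    ultimately show "x \<in> {2..n-1}" by auto
  qed
  then show ?thesis by (auto simp: HPs_def peak_sets_def)
qed

lemma HPs_idem: "HPs (HPs C) = HPs C"
  by (auto simp: HPs_def)

lemma peak_HPs: "P \<in> peak_sets n \<Longrightarrow> HPs P = P"
  by (auto simp: HPs_def peak_sets_def)

lemma peak_sub: assumes "P \<in> peak_sets n" shows "P \<subseteq> {1..<n}"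
proof
  fix x assume "x \<in> P"
  then have "x \<in> {2..n-1}" using assms by (auto simp: peak_sets_def)
  then show "x \<in> {1..<n}" by auto
qed

lemma finite_peak_sets: "finite (peak_sets n)"
proof -
  have "peak_sets n \<subseteq> Pow {2..n-1}" by (auto simp: peak_sets_def)
  then show ?thesis by (rule finite_subset) simp
qed

lemma Pi_class_Sym_deg: "Pi_class n P \<in> Sym_deg n"
  unfolding Pi_class_def by (intro Sym_deg_sum ribbon_Sym_deg) auto

lemma rho_Pi_class:
  assumes C: "C \<subseteq> {1..<n}"
  shows "rho n (Pi_class n P) C = (if HPs C = P then 1 else 0)"
proof -
  obtain J0 where J0: "J0 \<in> comps n" "Des J0 = C" using Des_surj C by blast
  have "rho n (Pi_class n P) C = (\<Sum>J\<in>{J \<in> comps n. HP J = P}. if C = Des J then 1 else 0)"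
    unfolding Pi_class_def using C by (simp add: rho_sum rho_ribbon)
  also have "\<dots> = (\<Sum>J\<in>{J \<in> comps n. HP J = P}. if J = J0 then 1 else 0)"
    by (rule sum.cong) (use J0 Des_inj in auto)
  also have "\<dots> = (if HPs C = P then 1 else 0)"
    using J0 by (simp add: sum.delta' HP_HPs)
  finally show ?thesis .
qed

section \<open>The elements tildeS\<close>

lemma tildeS_Sym_deg: "tildeS n \<in> Sym_deg n"
  unfolding tildeS_def
proof (intro Sym_deg_sum)
  fix k assume "k \<in> {..n}"
  then have "k + (n - k) = n" by simp
  then show "mult (Lambda k) (Sn (n - k)) \<in> Sym_deg n"
    using mult_Sym_deg[OF Lambda_Sym_deg Sn_Sym_deg, of k "n - k"] by simp
qed

lemma downclosed_interval:
  assumes C: "C \<subseteq> {1..<n}" and H: "HPs C = {}"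
  shows "C = {1..<Suc (card C)}"
proof -
  have down: "\<And>a b. a \<in> C \<Longrightarrow> 1 \<le> b \<Longrightarrow> b \<le> a \<Longrightarrow> b \<in> C"
  proof -
    fix a b assume "a \<in> C" "1 \<le> b" "b \<le> a"
    then show "b \<in> C"
    proof (induct "a - b" arbitrary: a)
      case 0 then show ?case by simp
    next
      case (Suc d)
      then have "a \<noteq> 1" by auto
      then have "a - 1 \<in> C" using Suc H unfolding HPs_def by blast
      then show ?case using Suc(1)[of "a - 1"] Suc by auto
    qed
  qed
  have fin: "finite C" using C finite_subset by blast
  show ?thesis
  proof (cases "C = {}")
    case False
    define M where "M = Max C"
    have M: "M \<in> C" "\<And>x. x \<in> C \<Longrightarrow> x \<le> M" using fin False by (auto simp: M_def)
    have "C = {1..M}" using down M C by fastforce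
    then show ?thesis by (simp add: atLeastLessThanSuc_atLeastAtMost)
  qed simp
qed

lemma rho_tildeS:
  assumes n: "1 \<le> n" and C: "C \<subseteq> {1..<n}"
  shows "rho n (tildeS n) C = (if HPs C = {} then 2 else 0)"
proof -
  define P where "P k \<longleftrightarrow> {1..<k} \<subseteq> C \<and> (\<forall>x\<in>C. x \<le> k)" for k
  have trm: "rho n (mult (Lambda k) (Sn (n - k))) C = (if P k then 1 else 0)" if k: "k \<le> n" for k
  proof -
    have nk: "k + (n - k) = n" using k by simp
    have C': "C \<subseteq> {1..<k + (n - k)}" using C nk by simp
    have "rho n (mult (Lambda k) (Sn (n - k))) C = rho (k + (n - k)) (mult (Lambda k) (Sn (n - k))) C"
      using nk by simp
    also have "\<dots> = rho k (Lambda k) (lft k C) * rho (n - k) (Sn (n - k)) (rgt k C)"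
      by (rule rho_mult[OF Lambda_Sym_deg Sn_Sym_deg C'])
    also have "\<dots> = (if lft k C = {1..<k} then 1 else 0) * (if rgt k C = {} then 1 else 0)"
      using rho_Lambda[OF lft_sub[OF C]] rho_Sn by simp
    also have "lft k C = {1..<k} \<longleftrightarrow> {1..<k} \<subseteq> C" using C by (auto simp: lft_def)
    also have "rgt k C = {} \<longleftrightarrow> (\<forall>x\<in>C. x \<le> k)" by (auto simp: rgt_def not_less)
    finally show ?thesis by (simp add: P_def)
  qed
  have "rho n (tildeS n) C = (\<Sum>k\<le>n. if P k then 1 else 0)"
    unfolding tildeS_def rho_sum using trm by simp
  also have "\<dots> = of_nat (card {k \<in> {..n}. P k})"
    by (simp add: sum.If_cases Int_def)
  also have "card {k \<in> {..n}. P k} = (if HPs C = {} then 2 else 0)"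
  proof (cases "HPs C = {}")
    case True
    define c where "c = card C"
    have Cc: "C = {1..<Suc c}" using downclosed_interval[OF C True] by (simp add: c_def)
    have "c < n"
    proof (cases "c = 0")
      case False then have "c \<in> C" using Cc by auto
      then show ?thesis using C by auto
    qed (use n in simp)
    have "{k \<in> {..n}. P k} = {c, Suc c}"
    proof (cases "c = 0")
      case True then show ?thesis using Cc \<open>c < n\<close> by (auto simp: P_def)
    next
      case False
      have Peq: "P k \<longleftrightarrow> c \<le> k \<and> k \<le> Suc c" for k
      proof
        assume "P k"
        then have "{1..<k} \<subseteq> {1..<Suc c}" "\<forall>x\<in>{1..<Suc c}. x \<le> k" using Cc by (auto simp: P_def)
        then have s1: "{1..<k} \<subseteq> {1..<Suc c}" and s2: "\<forall>x\<in>{1..<Suc c}. x \<le> k" by blast+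
        have "k \<le> Suc c"
        proof (rule ccontr)
          assume "\<not> k \<le> Suc c"
          then have "Suc c \<in> {1..<k}" by auto
          then show False using s1 by auto
        qed
        moreover have "c \<in> {1..<Suc c}" using False by auto
        then have "c \<le> k" using s2 by blast
        ultimately show "c \<le> k \<and> k \<le> Suc c" by simp
      next
        assume "c \<le> k \<and> k \<le> Suc c"
        then show "P k" using Cc by (auto simp: P_def)
      qed
      have "{k \<in> {..n}. P k} = {c..Suc c}"
      proof (rule set_eqI)
        fix k show "k \<in> {k \<in> {..n}. P k} \<longleftrightarrow> k \<in> {c..Suc c}"
          using Peq[of k] \<open>c < n\<close> by auto
      qed
      also have "{c..Suc c} = {c, Suc c}" by auto
      finally show ?thesis .
    qed
    then show ?thesis using True by simp
  next
    case False
    then obtain a where a: "a \<in> C" "a \<noteq> 1" "a - 1 \<notin> C" by (auto simp: HPs_def)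
    have "a \<ge> 2" using a C by force
    have "\<not> P k" for k
    proof
      assume "P k"
      then have "a \<le> k" using a by (auto simp: P_def)
      then have "a - 1 \<in> {1..<k}" using \<open>a \<ge> 2\<close> by auto
      then show False using \<open>P k\<close> a by (auto simp: P_def)
    qed
    then show ?thesis using False by simp
  qed
  finally show ?thesis by simp
qed

lemma tildeS_Pi_empty: "1 \<le> n \<Longrightarrow> tildeS n = scaleS 2 (Pi_class n {})"
  by (rule rho_eqI[OF tildeS_Sym_deg Sym_deg_scale[OF Pi_class_Sym_deg]])
     (simp add: rho_tildeS rho_scale rho_Pi_class)

lemma tildeS_0: "tildeS 0 = one_sym"
  by (simp add: tildeS_def Lambda_0 Sn_0)



abbreviation fsupp :: "('a \<Rightarrow> rat) \<Rightarrow> bool" where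
  "fsupp F \<equiv> finite {I. F I \<noteq> 0}"

lemma fsupp_add: "fsupp F \<Longrightarrow> fsupp G \<Longrightarrow> fsupp (F + G)"
  by (rule finite_subset[of _ "{I. F I \<noteq> 0} \<union> {I. G I \<noteq> 0}"]) auto

lemma fsupp_diff: "fsupp F \<Longrightarrow> fsupp G \<Longrightarrow> fsupp (F - G)"
  by (rule finite_subset[of _ "{I. F I \<noteq> 0} \<union> {I. G I \<noteq> 0}"]) auto

lemma fsupp_scale: "fsupp F \<Longrightarrow> fsupp (scaleS c F)"
  by (rule finite_subset[of _ "{I. F I \<noteq> 0}"]) (auto simp: scaleS_def)

lemma fsupp_zero: "fsupp (0 :: 'a \<Rightarrow> rat)"
  by simp

lemma fsupp_sum: "(\<And>i. i \<in> A \<Longrightarrow> fsupp (f i)) \<Longrightarrow> fsupp (sum f A :: 'a \<Rightarrow> rat)"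
proof (induct A rule: infinite_finite_induct)
  case (infinite A) then show ?case by (simp only: sum.infinite[OF infinite(1)] fsupp_zero)
next
  case empty then show ?case by (simp only: sum.empty fsupp_zero)
next
  case (insert x F) then show ?case by (simp only: sum.insert[OF insert(1,2)]) (intro fsupp_add; simp)
qed

lemma fsupp_SI: "fsupp (SI I)"
  by (rule finite_subset[of _ "{I}"]) (auto simp: SI_def)

lemma Sym_fsupp: "F \<in> Sym \<Longrightarrow> fsupp F"
  by (simp add: Sym_def)

lemma theta_eq:
  assumes "finite A" "{I. F I \<noteq> 0} \<subseteq> A"
  shows "theta F = (\<Sum>I\<in>A. scaleS (F I) (thetaS I))"
  unfolding theta_def by (rule sum.mono_neutral_left) (use assms in auto)

lemma theta_add:
  assumes "fsupp F" "fsupp G"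
  shows "theta (F + G) = theta F + theta G"
proof -
  define A where "A = {I. F I \<noteq> 0} \<union> {I. G I \<noteq> 0}"
  have fA: "finite A" using assms by (simp add: A_def)
  have "theta (F + G) = (\<Sum>I\<in>A. scaleS (F I + G I) (thetaS I))"
    by (subst theta_eq[OF fA]) (auto simp: A_def)
  also have "\<dots> = (\<Sum>I\<in>A. scaleS (F I) (thetaS I)) + (\<Sum>I\<in>A. scaleS (G I) (thetaS I))"
    by (simp add: VS.scale_left_distrib sum.distrib)
  also have "\<dots> = theta F + theta G"
    by (subst (1 2) theta_eq[OF fA]) (auto simp: A_def)
  finally show ?thesis .
qed

lemma theta_scale:
  assumes "fsupp F"
  shows "theta (scaleS c F) = scaleS c (theta F)"
proof -
  define A where "A = {I. F I \<noteq> 0}"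
  have fA: "finite A" using assms by (simp add: A_def)
  have "theta (scaleS c F) = (\<Sum>I\<in>A. scaleS (c * F I) (thetaS I))"
    by (subst theta_eq[OF fA]) (auto simp: A_def scaleS_def)
  also have "\<dots> = scaleS c (\<Sum>I\<in>A. scaleS (F I) (thetaS I))"
    by (simp add: VS.scale_sum_right)
  also have "\<dots> = scaleS c (theta F)"
    by (subst theta_eq[OF fA]) (auto simp: A_def)
  finally show ?thesis .
qed

lemma theta_zero: "theta 0 = 0"
  by (simp add: theta_def)

lemma theta_sum:
  assumes "\<And>i. i \<in> A \<Longrightarrow> fsupp (f i)"
  shows "theta (sum f A) = (\<Sum>i\<in>A. theta (f i))"
  using assms
proof (induct A rule: infinite_finite_induct)
  case (infinite A) then show ?case by (simp only: sum.infinite[OF infinite(1)] theta_zero)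
next
  case empty then show ?case by (simp only: sum.empty theta_zero)
next
  case (insert x F)
  have "theta (sum f (insert x F)) = theta (f x + sum f F)" by (simp only: sum.insert[OF insert(1,2)])
  also have "\<dots> = theta (f x) + theta (sum f F)"
    using insert by (intro theta_add fsupp_sum) auto
  also have "theta (sum f F) = (\<Sum>i\<in>F. theta (f i))" using insert.hyps(3) insert.prems by blast
  also have "theta (f x) + (\<Sum>i\<in>F. theta (f i)) = (\<Sum>i\<in>insert x F. theta (f i))"
    by (simp only: sum.insert[OF insert(1,2)])
  finally show ?case .
qed

lemma theta_SI: "theta (SI I) = thetaS I"
proof -
  have "theta (SI I) = (\<Sum>J\<in>{I}. scaleS (SI I J) (thetaS J))"
    by (rule theta_eq) (auto simp: SI_def)
  then show ?thesis by (simp add: SI_def)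
qed

lemma thetaS_Nil: "thetaS [] = one_sym"
  by (simp add: thetaS_def)

lemma thetaS_Cons: "thetaS (i # I) = mult (tildeS i) (thetaS I)"
  by (simp add: thetaS_def)

lemma thetaS_foldr: "foldr (\<lambda>i acc. mult (tildeS i) acc) I X = mult (thetaS I) X"
proof (induct I)
  case Nil then show ?case by (simp add: thetaS_Nil)
next
  case (Cons i I) then show ?case by (simp add: thetaS_Cons mult_assoc)
qed

lemma thetaS_append: "thetaS (I @ J) = mult (thetaS I) (thetaS J)"
proof (induct I)
  case Nil then show ?case by (simp add: thetaS_Nil)
next
  case (Cons i I) then show ?case by (simp add: thetaS_Cons mult_assoc)
qed

lemma theta_mult:
  assumes F: "fsupp F" and G: "fsupp G"
  shows "theta (mult F G) = mult (theta F) (theta G)"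
proof -
  define A where "A = {I. F I \<noteq> 0}"
  define B where "B = {I. G I \<noteq> 0}"
  have fA: "finite A" and fB: "finite B" using F G by (auto simp: A_def B_def)
  have "mult F G = (\<Sum>p\<in>A \<times> B. scaleS (F (fst p) * G (snd p)) (SI (fst p @ snd p)))"
    by (rule mult_repr) (use fA fB in \<open>auto simp: A_def B_def\<close>)
  then have "theta (mult F G) = (\<Sum>p\<in>A \<times> B. theta (scaleS (F (fst p) * G (snd p)) (SI (fst p @ snd p))))"
    by (simp add: theta_sum fsupp_scale fsupp_SI)
  also have "\<dots> = (\<Sum>p\<in>A \<times> B. scaleS (F (fst p) * G (snd p)) (mult (thetaS (fst p)) (thetaS (snd p))))"
    by (simp add: theta_scale fsupp_SI theta_SI thetaS_append)
  also have "\<dots> = (\<Sum>I\<in>A. \<Sum>J\<in>B. scaleS (F I * G J) (mult (thetaS I) (thetaS J)))"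
    by (simp add: sum.cartesian_product case_prod_beta)
  also have "\<dots> = mult (theta F) (theta G)"
  proof -
    have tF: "theta F = (\<Sum>I\<in>A. scaleS (F I) (thetaS I))" by (rule theta_eq[OF fA]) (auto simp: A_def)
    have tG: "theta G = (\<Sum>J\<in>B. scaleS (G J) (thetaS J))" by (rule theta_eq[OF fB]) (auto simp: B_def)
    have "mult (\<Sum>I\<in>A. scaleS (F I) (thetaS I)) (\<Sum>J\<in>B. scaleS (G J) (thetaS J)) =
        (\<Sum>I\<in>A. mult (scaleS (F I) (thetaS I)) (\<Sum>J\<in>B. scaleS (G J) (thetaS J)))"
      by (rule mult_sum_left)
    also have "\<dots> = (\<Sum>I\<in>A. \<Sum>J\<in>B. mult (scaleS (F I) (thetaS I)) (scaleS (G J) (thetaS J)))"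
      by (simp only: mult_sum_right)
    also have "\<dots> = (\<Sum>I\<in>A. \<Sum>J\<in>B. scaleS (F I * G J) (mult (thetaS I) (thetaS J)))"
      by (intro sum.cong refl) (simp add: mult_scale_left mult_scale_right mult.commute)
    finally show ?thesis using tF tG by simp
  qed
  finally show ?thesis .
qed

lemma thetaS_Sym_deg: "thetaS I \<in> Sym_deg (sum_list I)"
proof (induct I)
  case Nil then show ?case by (simp add: thetaS_Nil one_Sym_deg)
next
  case (Cons i I) then show ?case by (simp add: thetaS_Cons mult_Sym_deg tildeS_Sym_deg)
qed

lemma theta_Sym_deg_eq: "F \<in> Sym_deg n \<Longrightarrow> theta F = (\<Sum>I\<in>comps n. scaleS (F I) (thetaS I))"
  by (rule theta_eq) (auto simp: finite_comps Sym_deg_def)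

lemma theta_Sym_deg: "F \<in> Sym_deg n \<Longrightarrow> theta F \<in> Sym_deg n"
  unfolding theta_Sym_deg_eq
  by (intro Sym_deg_sum Sym_deg_scale) (use thetaS_Sym_deg in \<open>auto simp: comps_def\<close>)

abbreviation T :: "nat \<Rightarrow> sym set" where
  "T n \<equiv> theta ` Sym_deg n"

lemma Sym_deg_fsupp: "F \<in> Sym_deg n \<Longrightarrow> fsupp F"
  by (rule Sym_deg_finite)

lemma T_subspace: "VS.subspace (T n)"
proof (rule VS.subspaceI)
  show "0 \<in> T n" using theta_zero Sym_deg_zero by (metis image_eqI)
next
  fix x y assume "x \<in> T n" "y \<in> T n"
  then obtain F G where "F \<in> Sym_deg n" "G \<in> Sym_deg n" "x = theta F" "y = theta G" by auto
  then show "x + y \<in> T n"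
    using theta_add[of F G] Sym_deg_fsupp Sym_deg_add by (metis image_eqI)
next
  fix c x assume "x \<in> T n"
  then obtain F where "F \<in> Sym_deg n" "x = theta F" by auto
  then show "scaleS c x \<in> T n"
    using theta_scale[of F c] Sym_deg_fsupp Sym_deg_scale by (metis image_eqI)
qed

lemma T_mult: "X \<in> T m \<Longrightarrow> Y \<in> T k \<Longrightarrow> mult X Y \<in> T (m + k)"
proof -
  assume "X \<in> T m" "Y \<in> T k"
  then obtain F G where "F \<in> Sym_deg m" "G \<in> Sym_deg k" "X = theta F" "Y = theta G" by auto
  then show "mult X Y \<in> T (m + k)"
    using theta_mult[of F G] Sym_deg_fsupp mult_Sym_deg by (metis image_eqI)
qed

lemma theta_Sn: "theta (Sn n) = tildeS n"
proof (cases "n = 0")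
  case True then show ?thesis by (simp add: Sn_0 one_sym_def theta_SI thetaS_Nil tildeS_0)
next
  case False then show ?thesis by (simp add: Sn_def theta_SI thetaS_Cons thetaS_Nil)
qed

lemma tildeS_T: "tildeS n \<in> T n"
  using theta_Sn Sn_Sym_deg by (metis image_eqI)

lemma theta_one: "theta one_sym = one_sym"
  by (simp add: one_sym_def theta_SI thetaS_Nil)

lemma one_T: "one_sym \<in> T 0"
  using theta_one one_Sym_deg by (metis image_eqI)

section \<open>Peak functions\<close>

definition Pchar :: "nat \<Rightarrow> sym set" where
  "Pchar n = {F \<in> Sym_deg n. \<forall>C D. C \<subseteq> {1..<n} \<longrightarrow> D \<subseteq> {1..<n} \<longrightarrow> HPs C = HPs D \<longrightarrow> rho n F C = rho n F D}"

lemma PcharD: "F \<in> Pchar n \<Longrightarrow> C \<subseteq> {1..<n} \<Longrightarrow> D \<subseteq> {1..<n} \<Longrightarrow> HPs C = HPs D \<Longrightarrow> rho n F C = rho n F D"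
  unfolding Pchar_def by blast

lemma PcharS: "F \<in> Pchar n \<Longrightarrow> F \<in> Sym_deg n"
  unfolding Pchar_def by blast

lemma PcharI: "F \<in> Sym_deg n \<Longrightarrow> (\<And>C D. C \<subseteq> {1..<n} \<Longrightarrow> D \<subseteq> {1..<n} \<Longrightarrow> HPs C = HPs D \<Longrightarrow> rho n F C = rho n F D) \<Longrightarrow> F \<in> Pchar n"
  unfolding Pchar_def by blast

lemma Pchar_subspace: "VS.subspace (Pchar n)"
proof (rule VS.subspaceI)
  show "0 \<in> Pchar n" by (rule PcharI) (simp_all add: rho_zero)
next
  fix x y assume x: "x \<in> Pchar n" and y: "y \<in> Pchar n"
  show "x + y \<in> Pchar n"
  proof (rule PcharI)
    show "x + y \<in> Sym_deg n" using x y by (intro Sym_deg_add PcharS)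
  next
    fix C D assume H: "C \<subseteq> {1..<n}" "D \<subseteq> {1..<n}" "HPs C = HPs D"
    show "rho n (x + y) C = rho n (x + y) D"
      using PcharD[OF x H] PcharD[OF y H] by (simp add: rho_add)
  qed
next
  fix c x assume x: "x \<in> Pchar n"
  show "scaleS c x \<in> Pchar n"
  proof (rule PcharI)
    show "scaleS c x \<in> Sym_deg n" using x by (intro Sym_deg_scale PcharS)
  next
    fix C D assume H: "C \<subseteq> {1..<n}" "D \<subseteq> {1..<n}" "HPs C = HPs D"
    show "rho n (scaleS c x) C = rho n (scaleS c x) D"
      using PcharD[OF x H] by (simp add: rho_scale)
  qed
qed

lemma Pchar_mult:
  assumes F: "F \<in> Pchar m" and G: "G \<in> Pchar k"
  shows "mult F G \<in> Pchar (m + k)"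
  unfolding Pchar_def
proof (intro CollectI conjI allI impI)
  show "mult F G \<in> Sym_deg (m + k)" using F G by (simp add: Pchar_def mult_Sym_deg)
next
  fix C D assume C: "C \<subseteq> {1..<m + k}" and D: "D \<subseteq> {1..<m + k}" and H: "HPs C = HPs D"
  have Fs: "F \<in> Sym_deg m" and Gs: "G \<in> Sym_deg k" using F G by (auto simp: Pchar_def)
  have l: "rho m F (lft m C) = rho m F (lft m D)"
    using PcharD[OF F lft_sub[OF C] lft_sub[OF D]] H by (simp add: HPs_lft)
  have rC: "rgt m C \<subseteq> {1..<k}" using rgt_sub[OF C, of m] by simp
  have rD: "rgt m D \<subseteq> {1..<k}" using rgt_sub[OF D, of m] by simp
  have r: "rho k G (rgt m C) = rho k G (rgt m D)"
    using PcharD[OF G rC rD] H by (simp add: HPs_rgt)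
  show "rho (m + k) (mult F G) C = rho (m + k) (mult F G) D"
    using rho_mult[OF Fs Gs C] rho_mult[OF Fs Gs D] l r by simp
qed

lemma tildeS_Pchar: "tildeS n \<in> Pchar n"
proof (cases "n = 0")
  case True then show ?thesis using tildeS_Sym_deg by (auto simp: Pchar_def)
next
  case False
  show ?thesis
  proof (rule PcharI[OF tildeS_Sym_deg])
    fix C D assume "C \<subseteq> {1..<n}" "D \<subseteq> {1..<n}" "HPs C = HPs D"
    then show "rho n (tildeS n) C = rho n (tildeS n) D" using False by (simp add: rho_tildeS)
  qed
qed

lemma thetaS_Pchar: "thetaS I \<in> Pchar (sum_list I)"
proof (induct I)
  case Nil then show ?case by (auto simp: thetaS_Nil one_Sym_deg Pchar_def)
next
  case (Cons i I) then show ?case by (simp add: thetaS_Cons Pchar_mult tildeS_Pchar)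
qed

lemma T_Pchar: "T n \<subseteq> Pchar n"
proof
  fix x assume "x \<in> T n"
  then obtain F where F: "F \<in> Sym_deg n" "x = theta F" by auto
  have "theta F \<in> Pchar n"
    unfolding theta_Sym_deg_eq[OF F(1)]
    by (intro VS.subspace_sum[OF Pchar_subspace] VS.subspace_scale[OF Pchar_subspace])
       (use thetaS_Pchar in \<open>auto simp: comps_def\<close>)
  then show "x \<in> Pchar n" using F by simp
qed

lemma Pchar_Pspace: "Pchar n \<subseteq> Pspace n"
proof
  fix F assume F: "F \<in> Pchar n"
  have Fs: "F \<in> Sym_deg n" using F by (simp add: Pchar_def)
  define G where "G = (\<Sum>P\<in>peak_sets n. scaleS (rho n F P) (Pi_class n P))"
  have Gs: "G \<in> Sym_deg n" unfolding G_def by (intro Sym_deg_sum Sym_deg_scale Pi_class_Sym_deg)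
  have "F = G"
  proof (rule rho_eqI[OF Fs Gs])
    fix C assume C: "C \<subseteq> {1..<n}"
    have "rho n G C = (\<Sum>P\<in>peak_sets n. rho n F P * (if HPs C = P then 1 else 0))"
      unfolding G_def by (simp add: rho_sum rho_scale rho_Pi_class[OF C])
    also have "\<dots> = (\<Sum>P\<in>peak_sets n. if HPs C = P then rho n F P else 0)"
      by (rule sum.cong) auto
    also have "\<dots> = rho n F (HPs C)"
      using HPs_peak[OF C] finite_peak_sets by (simp add: sum.delta)
    also have "\<dots> = rho n F C"
      using PcharD[OF F peak_sub[OF HPs_peak[OF C]] C] by (simp add: HPs_idem)
    finally show "rho n F C = rho n G C" by simp
  qed
  moreover have "G \<in> Pspace n"
    unfolding G_def Pspace_def
    by (intro VS.span_sum VS.span_scale VS.span_base) auto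
  ultimately show "F \<in> Pspace n" by simp
qed

section \<open>Every peak class lies in the image\<close>

lemma Pi_class_zero:
  assumes "\<And>C. C \<subseteq> {1..<n} \<Longrightarrow> HPs C \<noteq> P"
  shows "Pi_class n P = 0"
  by (rule rho_eqI[OF Pi_class_Sym_deg Sym_deg_zero]) (use assms in \<open>simp add: rho_Pi_class rho_zero\<close>)

lemma Pi_class_0_empty: "Pi_class 0 {} = one_sym"
  by (rule rho_eqI[OF Pi_class_Sym_deg one_Sym_deg])
     (simp add: rho_Pi_class one_sym_def rho_SI comps_0 HPs_def)

lemma Pi_empty_T: "Pi_class n {} \<in> T n"
proof (cases "n = 0")
  case True then show ?thesis using Pi_class_0_empty one_T by simp
next
  case False
  then have "Pi_class n {} = scaleS (1/2) (tildeS n)"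
    using tildeS_Pi_empty[of n] by (simp add: scaleS_def fun_eq_iff)
  then show ?thesis using VS.subspace_scale[OF T_subspace tildeS_T] by simp
qed

lemma Pi_in_T: "Pi_class n P \<in> T n"
proof (induct n arbitrary: P rule: less_induct)
  case (less n)
  have outer: "\<And>k Q. k < n \<Longrightarrow> Pi_class k Q \<in> T k" using less by blast
  define mu where "mu P = (if P = {} then 0 else Max P)" for P :: "nat set"
  have main: "\<And>P. mu P = p \<Longrightarrow> Pi_class n P \<in> T n" for p
  proof (induct p rule: less_induct)
    case (less p P)
    show ?case
    proof (cases "\<exists>C. C \<subseteq> {1..<n} \<and> HPs C = P")
      case False
      then have "Pi_class n P = 0" by (intro Pi_class_zero) auto
      then show ?thesis by (subst \<open>Pi_class n P = 0\<close>) (rule VS.subspace_0[OF T_subspace])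
    next
      case True
      then obtain C0 where C0: "C0 \<subseteq> {1..<n}" "HPs C0 = P" by blast
      have Ppk: "P \<in> peak_sets n" using HPs_peak[OF C0(1)] C0(2) by simp
      show ?thesis
      proof (cases "P = {}")
        case True then show ?thesis using Pi_empty_T by simp
      next
        case Pne: False
        have finP: "finite P" using Ppk finite_subset by (auto simp: peak_sets_def)
        define q where "q = Max P"
        have qP: "q \<in> P" and qmax: "\<And>x. x \<in> P \<Longrightarrow> x \<le> q"
          using finP Pne by (auto simp: q_def)
        have "q \<in> {2..n-1}" using qP Ppk by (auto simp: peak_sets_def)
        then have q2: "2 \<le> q" "q < n" by auto
        have q1: "q - 1 \<notin> P" using qP Ppk by (auto simp: peak_sets_def)
        define m where "m = q - 1"
        define P' where "P' = P - {q}"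
        have P'm: "\<And>x. x \<in> P' \<Longrightarrow> x < m"
        proof -
          fix x assume "x \<in> P'"
          then have "x \<in> P" "x \<noteq> q" by (auto simp: P'_def)
          then have "x < q" "x \<noteq> q - 1" using qmax q1 by force+
          then show "x < m" by (simp add: m_def)
        qed
        have m1: "1 \<le> m" "m < n" using q2 by (auto simp: m_def)
        have finP': "finite P'" using finP by (simp add: P'_def)
        have Peq: "P = insert q P'" using qP by (auto simp: P'_def)
        have qm: "q = Suc m" using q2 by (simp add: m_def)
        define X where "X = mult (Pi_class m P') (Pi_class (n - m) {})"
        have "X \<in> T (m + (n - m))"
          unfolding X_def using m1 by (intro T_mult outer) auto
        then have XT: "X \<in> T n" using m1 by simp
        have Xs: "X \<in> Sym_deg n" unfolding X_def
          using mult_Sym_deg[OF Pi_class_Sym_deg Pi_class_Sym_deg, of m P' "n - m" "{}"] m1 by simp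
        have Xeq: "X = Pi_class n P' + Pi_class n P + Pi_class n (insert m P')"
        proof (rule rho_eqI[OF Xs])
          show "Pi_class n P' + Pi_class n P + Pi_class n (insert m P') \<in> Sym_deg n"
            by (intro Sym_deg_add Pi_class_Sym_deg)
        next
          fix C assume C: "C \<subseteq> {1..<n}"
          define Q where "Q = HPs C"
          have C': "C \<subseteq> {1..<m + (n - m)}" using C m1 by simp
          have "rho n X C = rho (m + (n - m)) X C" using m1 by simp
          also have "\<dots> = rho m (Pi_class m P') (lft m C) * rho (n - m) (Pi_class (n - m) {}) (rgt m C)"
            unfolding X_def by (rule rho_mult[OF Pi_class_Sym_deg Pi_class_Sym_deg C'])
          also have "\<dots> = (if lft m Q = P' then 1 else 0) * (if rgt m {a \<in> Q. Suc m < a} = {} then 1 else 0)"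
            using rho_Pi_class[OF lft_sub[OF C]] rho_Pi_class[OF rgt_sub[OF C]]
            by (simp add: HPs_lft HPs_rgt Q_def)
          also have "\<dots> = (if lft m Q = P' \<and> (\<forall>a\<in>Q. a \<le> q) then 1 else 0)"
            by (auto simp: rgt_def qm not_less)
          also have "(lft m Q = P' \<and> (\<forall>a\<in>Q. a \<le> q)) \<longleftrightarrow> (Q = P' \<or> Q = P \<or> Q = insert m P')"
          proof
            assume H: "lft m Q = P' \<and> (\<forall>a\<in>Q. a \<le> q)"
            have notboth: "\<not> (m \<in> Q \<and> q \<in> Q)"
              using qm unfolding Q_def HPs_def by auto
            have "Q = P' \<union> (Q \<inter> {m, q})"
            proof (intro set_eqI iffI)
              fix x assume "x \<in> Q"
              then have "x \<le> q" using H by blast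
              then have "x < m \<or> x = m \<or> x = q" using qm by auto
              then show "x \<in> P' \<union> (Q \<inter> {m, q})" using H \<open>x \<in> Q\<close> by (auto simp: lft_def)
            next
              fix x assume "x \<in> P' \<union> (Q \<inter> {m, q})"
              then show "x \<in> Q" using H by (auto simp: lft_def)
            qed
            then show "Q = P' \<or> Q = P \<or> Q = insert m P'"
              using notboth Peq by (cases "m \<in> Q"; cases "q \<in> Q") auto
          next
            assume "Q = P' \<or> Q = P \<or> Q = insert m P'"
            then show "lft m Q = P' \<and> (\<forall>a\<in>Q. a \<le> q)"
              using P'm qmax qm unfolding Peq by (auto simp: lft_def)
          qed
          also have "(if Q = P' \<or> Q = P \<or> Q = insert m P' then 1 else 0) =
              (if Q = P' then 1 else 0) + (if Q = P then 1 else 0) + (if Q = insert m P' then 1 else (0::rat))"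
          proof -
            have d1: "P' \<noteq> P" using qP by (auto simp: P'_def)
            have d2: "P' \<noteq> insert m P'" using P'm by auto
            have "q \<notin> insert m P'" using qm by (auto simp: P'_def)
            then have d3: "P \<noteq> insert m P'" using qP by blast
            show ?thesis using d1 d2 d3 by auto
          qed
          also have "\<dots> = rho n (Pi_class n P' + Pi_class n P + Pi_class n (insert m P')) C"
            by (simp add: rho_add rho_Pi_class[OF C] Q_def)
          finally show "rho n X C = rho n (Pi_class n P' + Pi_class n P + Pi_class n (insert m P')) C" .
        qed
        have pq: "p = q" using less.prems Pne by (simp add: mu_def q_def)
        have mu1: "mu P' < p"
        proof (cases "P' = {}")
          case True then show ?thesis using less.prems q2 Pne by (simp add: mu_def q_def)
        next
          case False
          then have "Max P' < m" using P'm finP' by simp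
          then show ?thesis using pq False qm by (simp add: mu_def)
        qed
        have mu2: "mu (insert m P') < p"
        proof -
          have "Max (insert m P') = m"
            by (rule Max_eqI) (use finP' P'm less_imp_le in auto)
          then show ?thesis using pq qm by (simp add: mu_def)
        qed
        have PX: "Pi_class n P = X - Pi_class n P' - Pi_class n (insert m P')"
          using Xeq by (simp add: algebra_simps)
        have T1: "Pi_class n P' \<in> T n" using less.hyps mu1 by blast
        have T2: "Pi_class n (insert m P') \<in> T n" using less.hyps mu2 by blast
        have "X - Pi_class n P' - Pi_class n (insert m P') \<in> T n"
          by (rule VS.subspace_diff[OF T_subspace VS.subspace_diff[OF T_subspace XT T1] T2])
        then show ?thesis by (subst PX)
      qed
    qed
  qed
  show ?case using main by blast
qed

theorem theta_image_eq: "theta ` Sym_deg n = Pspace n"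
proof
  show "T n \<subseteq> Pspace n" using T_Pchar Pchar_Pspace by blast
next
  show "Pspace n \<subseteq> T n"
    unfolding Pspace_def by (rule VS.span_minimal) (use Pi_in_T T_subspace in auto)
qed



section \<open>Dimension\<close>

lemma rho_Pi_at_peak:
  assumes "P \<in> peak_sets n"
  shows "rho n (Pi_class n P') P = (if P = P' then 1 else 0)"
  using rho_Pi_class[OF peak_sub[OF assms]] peak_HPs[OF assms] by simp

lemma Pi_inj: "inj_on (Pi_class n) (peak_sets n)"
proof (rule inj_onI)
  fix P P' assume P: "P \<in> peak_sets n" and P': "P' \<in> peak_sets n" and eq: "Pi_class n P = Pi_class n P'"
  have "rho n (Pi_class n P) P = 1" using rho_Pi_at_peak[OF P, of P] by simp
  then have "rho n (Pi_class n P') P = 1" using eq by simp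
  then show "P = P'" using rho_Pi_at_peak[OF P, of P'] by (simp split: if_splits)
qed

lemma Pi_independent: "VS.independent (Pi_class n ` peak_sets n)"
  unfolding VS.dependent_explicit
proof (intro notI, elim exE conjE)
  fix t u assume fin: "finite t" and sub: "t \<subseteq> Pi_class n ` peak_sets n"
    and z: "(\<Sum>v\<in>t. scaleS (u v) v) = 0" and ex: "\<exists>v\<in>t. u v \<noteq> 0"
  from ex obtain v where v: "v \<in> t" "u v \<noteq> 0" by blast
  then obtain P where P: "P \<in> peak_sets n" "v = Pi_class n P" using sub by blast
  have "rho n (\<Sum>v\<in>t. scaleS (u v) v) P = (\<Sum>w\<in>t. u w * rho n w P)"
    by (simp add: rho_sum rho_scale)
  also have "\<dots> = (\<Sum>w\<in>t. if w = v then u w else 0)"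
  proof (rule sum.cong)
    fix w assume "w \<in> t"
    then obtain P' where P': "P' \<in> peak_sets n" "w = Pi_class n P'" using sub by blast
    show "u w * rho n w P = (if w = v then u w else 0)"
    proof (cases "P' = P")
      case True
      then have "w = v" using P P' by simp
      then show ?thesis using rho_Pi_at_peak[OF P(1), of P'] True P' by simp
    next
      case False
      then have "rho n w P = 0" using rho_Pi_at_peak[OF P(1), of P'] P' by auto
      moreover have "w \<noteq> v"
      proof
        assume "w = v"
        then have "Pi_class n P' = Pi_class n P" using P P' by simp
        then have "P' = P" using inj_onD[OF Pi_inj _ P'(1) P(1)] by blast
        then show False using False by simp
      qed
      ultimately show ?thesis by simp
    qed
  qed simp
  also have "\<dots> = u v" using v fin by (simp add: sum.delta')
  finally have "rho n (\<Sum>v\<in>t. scaleS (u v) v) P = u v" .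
  then show False using z v by (simp add: rho_zero)
qed

lemma peak_mem:
  assumes "P \<in> peak_sets k" "x \<in> P"
  shows "2 \<le> x" "x \<le> k - 1"
proof -
  have "x \<in> {2..k-1}" using assms unfolding peak_sets_def by blast
  then show "2 \<le> x" "x \<le> k - 1" by auto
qed

lemma peak_sets_small: "n \<le> 2 \<Longrightarrow> peak_sets n = {{}}"
  by (auto simp: peak_sets_def)

lemma peak_sets_Suc:
  assumes n: "2 \<le> n"
  shows "peak_sets (Suc n) = peak_sets n \<union> insert n ` peak_sets (n - 1)"
proof (intro set_eqI iffI)
  fix P assume P: "P \<in> peak_sets (Suc n)"
  show "P \<in> peak_sets n \<union> insert n ` peak_sets (n - 1)"
  proof (cases "n \<in> P")
    case False
    have "P \<subseteq> {2..n-1}"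
    proof
      fix x assume "x \<in> P"
      then have "2 \<le> x" "x \<le> n" "x \<noteq> n" using peak_mem[OF P] False by auto
      then show "x \<in> {2..n-1}" by auto
    qed
    then show ?thesis using P by (auto simp: peak_sets_def)
  next
    case True
    then have n1: "n - 1 \<notin> P" using P by (auto simp: peak_sets_def)
    have "P - {n} \<subseteq> {2..n-1-1}"
    proof
      fix x assume x: "x \<in> P - {n}"
      then have "x \<in> {2..n}" using P by (auto simp: peak_sets_def)
      moreover have "x \<noteq> n" "x \<noteq> n - 1" using x n1 by auto
      ultimately show "x \<in> {2..n-1-1}" by auto
    qed
    then have "P - {n} \<in> peak_sets (n - 1)" using P by (auto simp: peak_sets_def)
    moreover have "P = insert n (P - {n})" using True by auto
    ultimately show ?thesis by blast
  qed
next
  fix P assume "P \<in> peak_sets n \<union> insert n ` peak_sets (n - 1)"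
  then show "P \<in> peak_sets (Suc n)"
  proof
    assume P: "P \<in> peak_sets n"
    have "P \<subseteq> {2..Suc n - 1}"
    proof
      fix x assume "x \<in> P"
      then have "2 \<le> x" "x \<le> n - 1" using peak_mem[OF P] by auto
      then show "x \<in> {2..Suc n - 1}" by auto
    qed
    then show ?thesis using P by (auto simp: peak_sets_def)
  next
    assume "P \<in> insert n ` peak_sets (n - 1)"
    then obtain Q where Q: "Q \<in> peak_sets (n - 1)" "P = insert n Q" by blast
    have Qs: "Q \<subseteq> {2..n-2}"
    proof
      fix x assume "x \<in> Q"
      then have "2 \<le> x" "x \<le> n - 1 - 1" using peak_mem[OF Q(1)] by auto
      then show "x \<in> {2..n-2}" by auto
    qed
    have "P \<subseteq> {2..Suc n - 1}"
    proof
      fix x assume "x \<in> P"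
      then have "x = n \<or> x \<in> Q" using Q by blast
      then show "x \<in> {2..Suc n - 1}"
      proof
        assume "x \<in> Q"
        then have "x \<in> {2..n-2}" using Qs by blast
        then show ?thesis by auto
      qed (use n in auto)
    qed
    moreover have "\<forall>a\<in>P. a - 1 \<notin> P"
    proof
      fix a assume "a \<in> P"
      then consider "a = n" | "a \<in> Q" using Q by blast
      then show "a - 1 \<notin> P"
      proof cases
        case 1
        have "n - 1 \<notin> Q"
        proof
          assume "n - 1 \<in> Q"
          then have "n - 1 \<in> {2..n-2}" using Qs by blast
          then show False by auto
        qed
        then show ?thesis using 1 Q n by auto
      next
        case 2
        then have "a - 1 \<notin> Q" using Q by (auto simp: peak_sets_def)
        moreover have "a \<le> n - 2" using 2 Qs by auto
        ultimately show ?thesis using Q n by auto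
      qed
    qed
    ultimately show ?thesis by (auto simp: peak_sets_def)
  qed
qed

lemma card_peak_sets: "card (peak_sets n) = fib_f n"
proof (induct n rule: fib_f.induct)
  case 1 then show ?case by (simp add: peak_sets_small)
next
  case 2 then show ?case by (simp add: peak_sets_small)
next
  case 3 then show ?case by (simp add: peak_sets_small numeral_2_eq_2)
next
  case (4 k)
  define n where "n = Suc (Suc k)"
  have n: "2 \<le> n" by (simp add: n_def)
  have disj: "peak_sets n \<inter> insert n ` peak_sets (n - 1) = {}"
    by (auto simp: peak_sets_def)
  have inj: "inj_on (insert n) (peak_sets (n - 1))"
  proof (rule inj_onI)
    fix P Q assume PQ: "P \<in> peak_sets (n - 1)" "Q \<in> peak_sets (n - 1)" and eq: "insert n P = insert n Q"
    have "n \<notin> P" using peak_mem[OF PQ(1)] n by force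
    moreover have "n \<notin> Q" using peak_mem[OF PQ(2)] n by force
    ultimately show "P = Q" using eq by (metis insert_ident)
  qed
  have "card (peak_sets (Suc n)) = card (peak_sets n) + card (insert n ` peak_sets (n - 1))"
    unfolding peak_sets_Suc[OF n] by (rule card_Un_disjoint) (use finite_peak_sets disj in auto)
  also have "\<dots> = card (peak_sets n) + card (peak_sets (n - 1))"
    using inj by (simp add: card_image)
  finally show ?case using 4 by (simp add: n_def)
qed

theorem dim_Pspace: "vector_space.dim scaleS (Pspace n) = fib_f n"
proof -
  have "VS.dim (Pspace n) = card (Pi_class n ` peak_sets n)"
    unfolding Pspace_def by (rule VS.dim_span_eq_card_independent[OF Pi_independent])
  also have "\<dots> = card (peak_sets n)" using Pi_inj by (simp add: card_image)
  finally show ?thesis using card_peak_sets by simp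
qed

section \<open>Odd compositions\<close>

definition Od :: "nat \<Rightarrow> nat list set" where
  "Od n = {I \<in> comps n. \<forall>i\<in>set I. odd i}"

definition bump :: "nat list \<Rightarrow> nat list" where
  "bump I = (hd I + 2) # tl I"

lemma Od_1: "Od 1 = {[1]}"
proof (intro set_eqI iffI)
  fix I assume I: "I \<in> Od 1"
  then obtain a J where aJ: "I = a # J" by (cases I) (auto simp: Od_def comps_def)
  then have "a # J \<in> comps 1" using I by (simp add: Od_def)
  then have "0 < a" "a \<le> 1" "J \<in> comps (1 - a)" by (simp_all only: comps_Cons)
  then have "a = 1" "J \<in> comps 0" by auto
  then show "I \<in> {[1]}" using aJ comps_0 by auto
qed (auto simp: Od_def comps_def)

lemma Od_2: "Od 2 = {[1, 1]}"
proof (intro set_eqI iffI)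
  fix I assume I: "I \<in> Od 2"
  then obtain a J where aJ: "I = a # J" by (cases I) (auto simp: Od_def comps_def)
  then have c: "a # J \<in> comps 2" and o: "\<forall>i\<in>set (a # J). odd i" using I by (simp_all add: Od_def)
  from c have "0 < a" "a \<le> 2" "J \<in> comps (2 - a)" by (simp_all only: comps_Cons)
  moreover from o have "odd a" "\<forall>i\<in>set J. odd i" by simp_all
  ultimately have "0 < a" "a \<le> 2" "odd a" "J \<in> comps (2 - a)" "\<forall>i\<in>set J. odd i" by blast+
  then have a1: "a = 1"
    by (metis One_nat_def Suc_1 dvd_refl le_Suc_eq less_one not_less)
  then have "J \<in> Od 1" using \<open>J \<in> comps (2 - a)\<close> \<open>\<forall>i\<in>set J. odd i\<close> by (simp add: Od_def)
  note a1 this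
  then show "I \<in> {[1, 1]}" using aJ Od_1 by auto
qed (auto simp: Od_def comps_def)

lemma Od_rec:
  assumes n: "1 \<le> n"
  shows "Od (n + 2) = Cons 1 ` Od (n + 1) \<union> bump ` Od n"
proof (intro set_eqI iffI)
  fix I assume I: "I \<in> Od (n + 2)"
  then obtain a J where aJ: "I = a # J" by (cases I) (auto simp: Od_def comps_def)
  have c: "a # J \<in> comps (n + 2)" and o: "\<forall>i\<in>set (a # J). odd i" using I aJ by (simp_all add: Od_def)
  from c have "0 < a" "a \<le> n + 2" "J \<in> comps (n + 2 - a)" by (simp_all only: comps_Cons)
  moreover from o have "odd a" "\<forall>i\<in>set J. odd i" by simp_all
  ultimately have a: "0 < a" "a \<le> n + 2" "odd a" "J \<in> comps (n + 2 - a)" "\<forall>i\<in>set J. odd i" by blast+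
  show "I \<in> Cons 1 ` Od (n + 1) \<union> bump ` Od n"
  proof (cases "a = 1")
    case True
    then have "J \<in> Od (n + 1)" using a by (auto simp: Od_def)
    then show ?thesis using aJ True by blast
  next
    case False
    then have "a \<ge> 3" using a by presburger
    then have "(a - 2) # J \<in> Od n" using a by (auto simp: Od_def comps_Cons)
    moreover have "bump ((a - 2) # J) = I" using aJ \<open>a \<ge> 3\<close> by (simp add: bump_def)
    ultimately show ?thesis by (metis UnI2 image_eqI)
  qed
next
  fix I assume "I \<in> Cons 1 ` Od (n + 1) \<union> bump ` Od n"
  then show "I \<in> Od (n + 2)"
  proof
    assume "I \<in> Cons 1 ` Od (n + 1)"
    then obtain J where J: "J \<in> Od (n + 1)" "I = 1 # J" by blast
    then have "J \<in> comps (n + 2 - 1)" "\<forall>i\<in>set J. odd i" by (auto simp: Od_def)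
    then show ?thesis using J(2) by (simp add: Od_def comps_Cons)
  next
    assume "I \<in> bump ` Od n"
    then obtain K where K: "K \<in> Od n" "I = bump K" by blast
    then obtain a J where aJ: "K = a # J" using n by (cases K) (auto simp: Od_def comps_def)
    then show ?thesis using K by (auto simp: Od_def comps_Cons bump_def)
  qed
qed

lemma finite_Od: "finite (Od n)"
  unfolding Od_def using finite_comps by simp

lemma card_Od: "1 \<le> n \<Longrightarrow> card (Od n) = fib_f n"
proof (induct n rule: fib_f.induct)
  case 1 then show ?case by simp
next
  case 2
  have e: "Od (Suc 0) = {[1]}" using Od_1 by (simp only: One_nat_def)
  show ?case by (simp add: e)
next
  case 3
  have e: "Od (Suc (Suc 0)) = {[1, 1]}" using Od_2 by (simp only: numeral_2_eq_2)
  show ?case by (simp add: e)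
next
  case (4 k)
  define n where "n = Suc k"
  have n: "1 \<le> n" by (simp add: n_def)
  have disj: "Cons 1 ` Od (n + 1) \<inter> bump ` Od n = {}"
  proof -
    have False if x1: "x \<in> Cons 1 ` Od (n + 1)" and x2: "x \<in> bump ` Od n" for x
    proof -
      obtain K where "x = bump K" using x2 by blast
      then have "hd x \<ge> 2" by (simp add: bump_def)
      moreover have "hd x = 1" using x1 by auto
      ultimately show False by simp
    qed
    then show ?thesis by blast
  qed
  have inj2: "inj_on bump (Od n)"
  proof (rule inj_onI)
    fix K L assume KL: "K \<in> Od n" "L \<in> Od n" and eq: "bump K = bump L"
    have "K \<in> comps n" "L \<in> comps n" using KL by (simp_all add: Od_def)
    then have "K \<noteq> []" "L \<noteq> []" using n comps_Nil_iff by auto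
    moreover have "hd K = hd L" "tl K = tl L" using eq by (simp_all add: bump_def)
    ultimately show "K = L" by (metis list.collapse)
  qed
  have "card (Od (n + 2)) = card (Cons 1 ` Od (n + 1)) + card (bump ` Od n)"
    unfolding Od_rec[OF n] by (rule card_Un_disjoint) (use finite_Od disj in auto)
  also have "\<dots> = card (Od (n + 1)) + card (Od n)"
    using inj2 by (simp add: card_image)
  finally show ?case using 4 by (simp add: n_def)
qed

theorem odd_comps_count: "1 \<le> n \<Longrightarrow> card {I \<in> comps n. \<forall>i\<in>set I. odd i} = fib_f n"
  using card_Od by (simp add: Od_def)

section \<open>The whole algebra\<close>

lemma SymI: "fsupp F \<Longrightarrow> (\<And>I. F I \<noteq> 0 \<Longrightarrow> 0 \<notin> set I) \<Longrightarrow> F \<in> Sym"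
  by (auto simp: Sym_def)

lemma SymD: "F \<in> Sym \<Longrightarrow> F I \<noteq> 0 \<Longrightarrow> 0 \<notin> set I"
  by (auto simp: Sym_def)

lemma Sym_add: assumes F: "F \<in> Sym" and G: "G \<in> Sym" shows "F + G \<in> Sym"
proof (rule SymI)
  show "fsupp (F + G)" by (rule fsupp_add[OF Sym_fsupp[OF F] Sym_fsupp[OF G]])
next
  fix I assume "(F + G) I \<noteq> 0"
  then have "F I \<noteq> 0 \<or> G I \<noteq> 0" by auto
  then show "0 \<notin> set I" using SymD[OF F] SymD[OF G] by blast
qed

lemma Sym_zero: "(0::sym) \<in> Sym"
  by (simp add: Sym_def)

lemma Sym_scale: assumes F: "F \<in> Sym" shows "scaleS c F \<in> Sym"
proof (rule SymI)
  show "fsupp (scaleS c F)" by (rule fsupp_scale[OF Sym_fsupp[OF F]])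
next
  fix I assume "scaleS c F I \<noteq> 0"
  then have "F I \<noteq> 0" by (simp add: scaleS_def)
  then show "0 \<notin> set I" by (rule SymD[OF F])
qed

lemma Sym_sum: "(\<And>i. i \<in> A \<Longrightarrow> f i \<in> Sym) \<Longrightarrow> sum f A \<in> Sym"
proof (induct A rule: infinite_finite_induct)
  case (infinite A) then show ?case by (simp only: sum.infinite[OF infinite(1)] Sym_zero)
next
  case empty then show ?case by (simp only: sum.empty Sym_zero)
next
  case (insert x F) then show ?case by (simp only: sum.insert[OF insert(1,2)]) (intro Sym_add; simp)
qed

lemma theta_Sym: "F \<in> Sym \<Longrightarrow> theta F \<in> Sym"
  unfolding theta_def
  by (intro Sym_sum Sym_scale) (use thetaS_Sym_deg Sym_deg_Sym in blast)

lemma thetaS_val: "thetaS I J \<noteq> 0 \<Longrightarrow> sum_list J = sum_list I"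
  using thetaS_Sym_deg[of I] by (auto simp: Sym_deg_def comps_def)

lemma hom_comp_theta:
  assumes F: "fsupp F"
  shows "hom_comp n (theta F) = theta (hom_comp n F)"
proof
  fix J
  define A where "A = {I. F I \<noteq> 0}"
  have fA: "finite A" using F by (simp add: A_def)
  have t1: "theta F = (\<Sum>I\<in>A. scaleS (F I) (thetaS I))" by (rule theta_eq[OF fA]) (auto simp: A_def)
  have t2: "theta (hom_comp n F) = (\<Sum>I\<in>A. scaleS (hom_comp n F I) (thetaS I))"
    by (rule theta_eq[OF fA]) (auto simp: A_def hom_comp_def)
  have "hom_comp n (theta F) J = (if sum_list J = n then (\<Sum>I\<in>A. F I * thetaS I J) else 0)"
    by (simp add: hom_comp_def t1 sum_fun_apply scaleS_def)
  also have "\<dots> = (\<Sum>I\<in>A. hom_comp n F I * thetaS I J)"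
  proof (cases "sum_list J = n")
    case True
    have "F I * thetaS I J = hom_comp n F I * thetaS I J" for I
      using thetaS_val[of I J] True by (cases "sum_list I = n") (auto simp: hom_comp_def)
    then show ?thesis using True by (simp only: True if_True)
  next
    case False
    have z: "hom_comp n F I * thetaS I J = 0" for I
      using thetaS_val[of I J] False by (cases "sum_list I = n") (auto simp: hom_comp_def)
    show ?thesis using False by (simp only: False if_False z sum.neutral_const)
  qed
  also have "\<dots> = theta (hom_comp n F) J"
    by (simp add: t2 sum_fun_apply scaleS_def)
  finally show "hom_comp n (theta F) J = theta (hom_comp n F) J" .
qed

lemma hom_comp_Sym_deg: "F \<in> Sym \<Longrightarrow> hom_comp n F \<in> Sym_deg n"
  by (auto simp: hom_comp_def Sym_deg_def comps_def dest: SymD split: if_splits)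

theorem theta_Sym_eq: "theta ` Sym = Pall"
proof
  show "theta ` Sym \<subseteq> Pall"
  proof
    fix X assume "X \<in> theta ` Sym"
    then obtain F where F: "F \<in> Sym" "X = theta F" by blast
    have "hom_comp n X \<in> Pspace n" for n
      using F hom_comp_theta[OF Sym_fsupp[OF F(1)], of n] hom_comp_Sym_deg[OF F(1), of n] theta_image_eq[of n]
      by (metis image_eqI)
    then show "X \<in> Pall" using F theta_Sym by (auto simp: Pall_def)
  qed
next
  show "Pall \<subseteq> theta ` Sym"
  proof
    fix F assume F: "F \<in> Pall"
    then have FS: "F \<in> Sym" and Fh: "\<And>n. hom_comp n F \<in> Pspace n" by (auto simp: Pall_def)
    have "\<forall>n. \<exists>G. G \<in> Sym_deg n \<and> theta G = hom_comp n F"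
      using Fh theta_image_eq by (metis imageE)
    then obtain G where G: "\<And>n. G n \<in> Sym_deg n" "\<And>n. theta (G n) = hom_comp n F" by metis
    define N where "N = sum_list ` {I. F I \<noteq> 0}"
    have fN: "finite N" using Sym_fsupp[OF FS] by (simp add: N_def)
    define H where "H = (\<Sum>n\<in>N. G n)"
    have HS: "H \<in> Sym" unfolding H_def using G Sym_deg_Sym by (intro Sym_sum) auto
    have "theta H = (\<Sum>n\<in>N. theta (G n))"
      unfolding H_def using G Sym_deg_fsupp by (intro theta_sum) auto
    also have "\<dots> = (\<Sum>n\<in>N. hom_comp n F)" using G by simp
    also have "\<dots> = F"
    proof
      fix I
      have "(\<Sum>n\<in>N. hom_comp n F) I = (\<Sum>n\<in>N. if sum_list I = n then F I else 0)"
        by (simp add: sum_fun_apply hom_comp_def)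
      also have "\<dots> = (if sum_list I \<in> N then F I else 0)"
        using fN by (simp add: sum.delta)
      also have "\<dots> = F I" by (auto simp: N_def)
      finally show "(\<Sum>n\<in>N. hom_comp n F) I = F I" .
    qed
    finally show "F \<in> theta ` Sym" using HS by (metis image_eqI)
  qed
qed

lemma one_Sym: "one_sym \<in> Sym"
  using one_Sym_deg Sym_deg_Sym by blast

lemma one_Pall: "one_sym \<in> Pall"
  using theta_Sym_eq theta_one one_Sym by (metis image_eqI)

lemma mult_Sym:
  assumes F: "F \<in> Sym" and G: "G \<in> Sym"
  shows "mult F G \<in> Sym"
proof (rule SymI)
  define A where "A = {I. F I \<noteq> 0}"
  define B where "B = {I. G I \<noteq> 0}"
  have "{K. mult F G K \<noteq> 0} \<subseteq> (\<lambda>p. fst p @ snd p) ` (A \<times> B)"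
  proof
    fix K assume "K \<in> {K. mult F G K \<noteq> 0}"
    then have "mult F G K \<noteq> 0" by simp
    then obtain i where "F (take i K) * G (drop i K) \<noteq> 0"
      unfolding mult_def by (meson sum.not_neutral_contains_not_neutral)
    then show "K \<in> (\<lambda>p. fst p @ snd p) ` (A \<times> B)"
      by (intro image_eqI[where x="(take i K, drop i K)"]) (auto simp: A_def B_def)
  qed
  moreover have "finite ((\<lambda>p. fst p @ snd p) ` (A \<times> B))"
    using Sym_fsupp[OF F] Sym_fsupp[OF G] by (simp add: A_def B_def)
  ultimately show "fsupp (mult F G)" by (rule finite_subset)
next
  fix K assume "mult F G K \<noteq> 0"
  then obtain i where "F (take i K) * G (drop i K) \<noteq> 0"
    unfolding mult_def by (meson sum.not_neutral_contains_not_neutral)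
  then have "0 \<notin> set (take i K)" "0 \<notin> set (drop i K)" using F G by (auto dest: SymD)
  then show "0 \<notin> set K" by (metis Un_iff append_take_drop_id set_append)
qed

lemma Pall_mult: "F \<in> Pall \<Longrightarrow> G \<in> Pall \<Longrightarrow> mult F G \<in> Pall"
proof -
  assume "F \<in> Pall" "G \<in> Pall"
  then obtain F' G' where "F' \<in> Sym" "G' \<in> Sym" "F = theta F'" "G = theta G'"
    using theta_Sym_eq by blast
  then show "mult F G \<in> Pall"
    using theta_mult[of F' G'] Sym_fsupp mult_Sym theta_Sym_eq by (metis image_eqI)
qed



lemma tensor_app: "tensor u v (A, B) = u A * v B"
  by (simp add: tensor_def)

lemma tensor_add_left: "tensor (u + v) w = tensor u w + tensor v w"
  by (rule ext) (auto simp: tensor_def algebra_simps)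

lemma tensor_add_right: "tensor u (v + w) = tensor u v + tensor u w"
  by (rule ext) (auto simp: tensor_def algebra_simps)

lemma tensor_scale_left: "tensor (scaleS c u) v = scaleT c (tensor u v)"
  by (rule ext) (auto simp: tensor_def scaleS_def scaleT_def)

lemma tensor_scale_right: "tensor u (scaleS c v) = scaleT c (tensor u v)"
  by (rule ext) (auto simp: tensor_def scaleS_def scaleT_def)

lemma tensor_zero_left: "tensor 0 v = 0"
  by (rule ext) (auto simp: tensor_def)

lemma tensor_zero_right: "tensor u 0 = 0"
  by (rule ext) (auto simp: tensor_def)

lemma tensor_sum_left: "tensor (sum f A) v = (\<Sum>i\<in>A. tensor (f i) v)"
  by (rule ext) (auto simp: tensor_def sum_fun_apply sum_distrib_right)

lemma tensor_sum_right: "tensor u (sum f A) = (\<Sum>i\<in>A. tensor u (f i))"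
  by (rule ext) (auto simp: tensor_def sum_fun_apply sum_distrib_left)

lemma tmult_app: "tmult F G (A, B) = (\<Sum>i\<le>length A. \<Sum>j\<le>length B.
      F (take i A, take j B) * G (drop i A, drop j B))"
  by (simp add: tmult_def)

lemma tmult_add_left: "tmult (F + G) H = tmult F H + tmult G H"
  by (rule ext) (auto simp: tmult_def algebra_simps sum.distrib)

lemma tmult_add_right: "tmult F (G + H) = tmult F G + tmult F H"
  by (rule ext) (auto simp: tmult_def algebra_simps sum.distrib)

lemma tmult_scale_left: "tmult (scaleT c F) G = scaleT c (tmult F G)"
  by (rule ext) (auto simp: tmult_def scaleT_def sum_distrib_left mult.assoc)

lemma tmult_scale_right: "tmult F (scaleT c G) = scaleT c (tmult F G)"
  by (rule ext) (auto simp: tmult_def scaleT_def sum_distrib_left mult.left_commute)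

lemma tmult_zero_left: "tmult 0 G = 0"
  by (rule ext) (auto simp: tmult_def)

lemma tmult_zero_right: "tmult F 0 = 0"
  by (rule ext) (auto simp: tmult_def)

lemma tmult_sum_left: "tmult (sum f A) G = (\<Sum>i\<in>A. tmult (f i) G)"
proof (cases "finite A")
  case False then show ?thesis by (simp only: sum.infinite[OF False] tmult_zero_left)
next
  case True then show ?thesis
  proof (induct A)
    case (insert x F) then show ?case by (simp only: sum.insert[OF insert(1,2)] tmult_add_left)
  qed (simp only: sum.empty tmult_zero_left)
qed

lemma tmult_sum_right: "tmult G (sum f A) = (\<Sum>i\<in>A. tmult G (f i))"
proof (cases "finite A")
  case False then show ?thesis by (simp only: sum.infinite[OF False] tmult_zero_right)
next
  case True then show ?thesis
  proof (induct A)
    case (insert x F) then show ?case by (simp only: sum.insert[OF insert(1,2)] tmult_add_right)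
  qed (simp only: sum.empty tmult_zero_right)
qed

lemma tmult_tensor: "tmult (tensor a b) (tensor c d) = tensor (mult a c) (mult b d)"
proof (rule ext, clarify)
  fix A B :: "nat list"
  have "tmult (tensor a b) (tensor c d) (A, B) =
      (\<Sum>i\<le>length A. \<Sum>j\<le>length B. (a (take i A) * c (drop i A)) * (b (take j B) * d (drop j B)))"
    by (simp add: tmult_app tensor_app mult_ac)
  also have "\<dots> = (\<Sum>i\<le>length A. a (take i A) * c (drop i A)) * (\<Sum>j\<le>length B. b (take j B) * d (drop j B))"
    by (simp add: sum_product)
  also have "\<dots> = tensor (mult a c) (mult b d) (A, B)"
    by (simp add: tensor_app mult_def)
  finally show "tmult (tensor a b) (tensor c d) (A, B) = tensor (mult a c) (mult b d) (A, B)" .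
qed

lemma SI_Nil_take: "i \<le> length A \<Longrightarrow> SI [] (take i A) = (if i = 0 then 1 else 0)"
  by (auto simp: SI_def)

lemma SI_Nil_drop: "i \<le> length A \<Longrightarrow> SI [] (drop i A) = (if i = length A then 1 else 0)"
  by (auto simp: SI_def)

lemma sum_delta_mult: "(\<Sum>i\<le>(n::nat). (if i = k then 1 else 0) * (f i :: rat)) = (if k \<le> n then f k else 0)"
proof -
  have "(\<Sum>i\<le>n. (if i = k then 1 else 0) * f i) = (\<Sum>i\<le>n. if i = k then f i else 0)"
    by (rule sum.cong) auto
  then show ?thesis by (simp add: sum.delta)
qed

lemma tmult_one_left: "tmult (tensor one_sym one_sym) X = X"
proof (rule ext, clarify)
  fix A B :: "nat list"
  have "tmult (tensor one_sym one_sym) X (A, B) =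
      (\<Sum>i\<le>length A. (if i = 0 then 1 else 0) * (\<Sum>j\<le>length B. (if j = 0 then 1 else 0) * X (drop i A, drop j B)))"
    unfolding tmult_app tensor_app one_sym_def sum_distrib_left
    by (intro sum.cong refl) (simp add: SI_Nil_take)
  also have "\<dots> = X (A, B)" by (simp add: sum_delta_mult)
  finally show "tmult (tensor one_sym one_sym) X (A, B) = X (A, B)" .
qed

lemma tmult_one_right: "tmult X (tensor one_sym one_sym) = X"
proof (rule ext, clarify)
  fix A B :: "nat list"
  have "tmult X (tensor one_sym one_sym) (A, B) =
      (\<Sum>i\<le>length A. (if i = length A then 1 else 0) * (\<Sum>j\<le>length B. (if j = length B then 1 else 0) * X (take i A, take j B)))"
    unfolding tmult_app tensor_app one_sym_def sum_distrib_left
    by (intro sum.cong refl) (simp add: SI_Nil_drop mult_ac)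
  also have "\<dots> = X (A, B)" by (simp add: sum_delta_mult)
  finally show "tmult X (tensor one_sym one_sym) (A, B) = X (A, B)" .
qed

lemma quad_sum:
  "(\<Sum>i\<le>(a::nat). \<Sum>j\<le>(b::nat). \<Sum>i'\<le>i. \<Sum>j'\<le>j. f i j i' j') =
   (\<Sum>i'\<le>a. \<Sum>j'\<le>b. \<Sum>k\<le>a-i'. \<Sum>l\<le>b-j'. f (i'+k) (j'+l) i' j')"
proof -
  have "(\<Sum>i\<le>a. \<Sum>j\<le>b. \<Sum>i'\<le>i. \<Sum>j'\<le>j. f i j i' j') = (\<Sum>i\<le>a. \<Sum>i'\<le>i. \<Sum>j\<le>b. \<Sum>j'\<le>j. f i j i' j')"
    by (rule sum.cong[OF refl], rule sum.swap)
  also have "\<dots> = (\<Sum>i'\<le>a. \<Sum>k\<le>a-i'. \<Sum>j\<le>b. \<Sum>j'\<le>j. f (i'+k) j i' j')"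
    by (rule tri_sum)
  also have "\<dots> = (\<Sum>i'\<le>a. \<Sum>k\<le>a-i'. \<Sum>j'\<le>b. \<Sum>l\<le>b-j'. f (i'+k) (j'+l) i' j')"
    by (rule sum.cong[OF refl], rule sum.cong[OF refl], rule tri_sum)
  also have "\<dots> = (\<Sum>i'\<le>a. \<Sum>j'\<le>b. \<Sum>k\<le>a-i'. \<Sum>l\<le>b-j'. f (i'+k) (j'+l) i' j')"
    by (rule sum.cong[OF refl], rule sum.swap)
  finally show ?thesis .
qed

lemma tmult_assoc: "tmult (tmult F G) H = tmult F (tmult G H)"
proof (rule ext, clarify)
  fix A B :: "nat list"
  define a where "a = length A"
  define b where "b = length B"
  have "tmult (tmult F G) H (A, B) =
     (\<Sum>i\<le>a. \<Sum>j\<le>b. \<Sum>i'\<le>i. \<Sum>j'\<le>j. F (take i' A, take j' B) *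
        G (drop i' (take i A), drop j' (take j B)) * H (drop i A, drop j B))"
    unfolding tmult_app a_def b_def
    by (intro sum.cong refl) (auto simp: sum_distrib_right min_absorb1 intro!: sum.cong)
  also have "\<dots> = (\<Sum>i'\<le>a. \<Sum>j'\<le>b. \<Sum>k\<le>a-i'. \<Sum>l\<le>b-j'. F (take i' A, take j' B) *
        G (drop i' (take (i'+k) A), drop j' (take (j'+l) B)) * H (drop (i'+k) A, drop (j'+l) B))"
    by (rule quad_sum)
  also have "\<dots> = tmult F (tmult G H) (A, B)"
    unfolding tmult_app a_def b_def
    by (intro sum.cong refl)
       (auto simp: sum_distrib_left drop_take add.commute mult.assoc intro!: sum.cong)
  finally show "tmult (tmult F G) H (A, B) = tmult F (tmult G H) (A, B)" .
qed

lemma fsuppT_add: "fsupp (F :: sym2) \<Longrightarrow> fsupp G \<Longrightarrow> fsupp (F + G)"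
  by (rule finite_subset[of _ "{I. F I \<noteq> 0} \<union> {I. G I \<noteq> 0}"]) auto

lemma Delta_eq:
  assumes "finite A" "{I. F I \<noteq> 0} \<subseteq> A"
  shows "Delta F = (\<Sum>I\<in>A. scaleT (F I) (DeltaS I))"
  unfolding Delta_def by (rule sum.mono_neutral_left) (use assms in auto)

lemma Delta_add:
  assumes "fsupp F" "fsupp G"
  shows "Delta (F + G) = Delta F + Delta G"
proof -
  define A where "A = {I. F I \<noteq> 0} \<union> {I. G I \<noteq> 0}"
  have fA: "finite A" using assms by (simp add: A_def)
  have "Delta (F + G) = (\<Sum>I\<in>A. scaleT (F I + G I) (DeltaS I))"
    by (subst Delta_eq[OF fA]) (auto simp: A_def)
  also have "\<dots> = (\<Sum>I\<in>A. scaleT (F I) (DeltaS I)) + (\<Sum>I\<in>A. scaleT (G I) (DeltaS I))"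
    by (simp add: VT.scale_left_distrib sum.distrib)
  also have "\<dots> = Delta F + Delta G"
    by (subst (1 2) Delta_eq[OF fA]) (auto simp: A_def)
  finally show ?thesis .
qed

lemma Delta_scale:
  assumes "fsupp F"
  shows "Delta (scaleS c F) = scaleT c (Delta F)"
proof -
  define A where "A = {I. F I \<noteq> 0}"
  have fA: "finite A" using assms by (simp add: A_def)
  have "Delta (scaleS c F) = (\<Sum>I\<in>A. scaleT (c * F I) (DeltaS I))"
    by (subst Delta_eq[OF fA]) (auto simp: A_def scaleS_def)
  also have "\<dots> = scaleT c (\<Sum>I\<in>A. scaleT (F I) (DeltaS I))"
    by (simp add: VT.scale_sum_right)
  also have "\<dots> = scaleT c (Delta F)"
    by (subst Delta_eq[OF fA]) (auto simp: A_def)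
  finally show ?thesis .
qed

lemma Delta_zero: "Delta 0 = 0"
  by (simp add: Delta_def)

lemma Delta_sum:
  assumes "\<And>i. i \<in> A \<Longrightarrow> fsupp (f i)"
  shows "Delta (sum f A) = (\<Sum>i\<in>A. Delta (f i))"
  using assms
proof (induct A rule: infinite_finite_induct)
  case (infinite A) then show ?case by (simp only: sum.infinite[OF infinite(1)] Delta_zero)
next
  case empty then show ?case by (simp only: sum.empty Delta_zero)
next
  case (insert x F)
  have "Delta (sum f (insert x F)) = Delta (f x + sum f F)" by (simp only: sum.insert[OF insert(1,2)])
  also have "\<dots> = Delta (f x) + Delta (sum f F)"
    using insert by (intro Delta_add fsupp_sum) auto
  also have "Delta (sum f F) = (\<Sum>i\<in>F. Delta (f i))" using insert.hyps(3) insert.prems by blast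
  also have "Delta (f x) + (\<Sum>i\<in>F. Delta (f i)) = (\<Sum>i\<in>insert x F. Delta (f i))"
    by (simp only: sum.insert[OF insert(1,2)])
  finally show ?case .
qed

lemma Delta_SI: "Delta (SI I) = DeltaS I"
proof -
  have "Delta (SI I) = (\<Sum>J\<in>{I}. scaleT (SI I J) (DeltaS J))"
    by (rule Delta_eq) (auto simp: SI_def)
  then show ?thesis by (simp add: SI_def)
qed

lemma DeltaS_append: "DeltaS (I @ J) = tmult (DeltaS I) (DeltaS J)"
proof (induct I)
  case Nil then show ?case by (simp add: tmult_one_left)
next
  case (Cons i I) then show ?case by (simp add: tmult_assoc)
qed

lemma Delta_mult:
  assumes F: "fsupp F" and G: "fsupp G"
  shows "Delta (mult F G) = tmult (Delta F) (Delta G)"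
proof -
  define A where "A = {I. F I \<noteq> 0}"
  define B where "B = {I. G I \<noteq> 0}"
  have fA: "finite A" and fB: "finite B" using F G by (auto simp: A_def B_def)
  have "mult F G = (\<Sum>p\<in>A \<times> B. scaleS (F (fst p) * G (snd p)) (SI (fst p @ snd p)))"
    by (rule mult_repr) (use fA fB in \<open>auto simp: A_def B_def\<close>)
  then have "Delta (mult F G) = (\<Sum>p\<in>A \<times> B. Delta (scaleS (F (fst p) * G (snd p)) (SI (fst p @ snd p))))"
    by (simp add: Delta_sum fsupp_scale fsupp_SI)
  also have "\<dots> = (\<Sum>p\<in>A \<times> B. scaleT (F (fst p) * G (snd p)) (tmult (DeltaS (fst p)) (DeltaS (snd p))))"
    by (simp add: Delta_scale fsupp_SI Delta_SI DeltaS_append)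
  also have "\<dots> = (\<Sum>I\<in>A. \<Sum>J\<in>B. scaleT (F I * G J) (tmult (DeltaS I) (DeltaS J)))"
    by (simp add: sum.cartesian_product case_prod_beta)
  also have "\<dots> = tmult (Delta F) (Delta G)"
  proof -
    have tF: "Delta F = (\<Sum>I\<in>A. scaleT (F I) (DeltaS I))" by (rule Delta_eq[OF fA]) (auto simp: A_def)
    have tG: "Delta G = (\<Sum>J\<in>B. scaleT (G J) (DeltaS J))" by (rule Delta_eq[OF fB]) (auto simp: B_def)
    have "tmult (\<Sum>I\<in>A. scaleT (F I) (DeltaS I)) (\<Sum>J\<in>B. scaleT (G J) (DeltaS J)) =
        (\<Sum>I\<in>A. tmult (scaleT (F I) (DeltaS I)) (\<Sum>J\<in>B. scaleT (G J) (DeltaS J)))"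
      by (rule tmult_sum_left)
    also have "\<dots> = (\<Sum>I\<in>A. \<Sum>J\<in>B. tmult (scaleT (F I) (DeltaS I)) (scaleT (G J) (DeltaS J)))"
      by (simp only: tmult_sum_right)
    also have "\<dots> = (\<Sum>I\<in>A. \<Sum>J\<in>B. scaleT (F I * G J) (tmult (DeltaS I) (DeltaS J)))"
      by (intro sum.cong refl) (simp add: tmult_scale_left tmult_scale_right mult.commute)
    finally show ?thesis using tF tG by simp
  qed
  finally show ?thesis .
qed

lemma Delta_one: "Delta one_sym = tensor one_sym one_sym"
  by (simp add: one_sym_def Delta_SI)

lemma Delta_Sn: "Delta (Sn j) = (\<Sum>a\<le>j. tensor (Sn a) (Sn (j - a)))"
proof (cases "j = 0")
  case True then show ?thesis by (simp add: Sn_0 Delta_one)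
next
  case False then show ?thesis by (simp add: Sn_def Delta_SI tmult_one_right)
qed



section \<open>The recursion for Lambda\<close>

lemma mult_Sn_Lambda_Sym_deg: "j \<le> k \<Longrightarrow> mult (Sn j) (Lambda (k - j)) \<in> Sym_deg k"
  using mult_Sym_deg[OF Sn_Sym_deg Lambda_Sym_deg, of j "k - j"] by simp

definition Eg :: "nat \<Rightarrow> sym" where
  "Eg v = (\<Sum>a\<le>v. scaleS ((-1)^a) (mult (Sn a) (Lambda (v - a))))"

lemma Eg_zero:
  assumes k: "1 \<le> k"
  shows "Eg k = 0"
proof (rule rho_eqI[OF _ Sym_deg_zero])
  show "Eg k \<in> Sym_deg k" unfolding Eg_def
    by (intro Sym_deg_sum Sym_deg_scale mult_Sn_Lambda_Sym_deg) auto
next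
  fix C assume C: "C \<subseteq> {1..<k}"
  define P where "P j \<longleftrightarrow> (\<forall>x\<in>C. j \<le> x) \<and> (\<forall>x. j < x \<and> x < k \<longrightarrow> x \<in> C)" for j
  have trm: "rho k (mult (Sn j) (Lambda (k - j))) C = (if P j then 1 else 0)" if j: "j \<le> k" for j
  proof -
    have nk: "j + (k - j) = k" using j by simp
    have C': "C \<subseteq> {1..<j + (k - j)}" using C nk by simp
    have "rho k (mult (Sn j) (Lambda (k - j))) C = rho (j + (k - j)) (mult (Sn j) (Lambda (k - j))) C"
      using nk by simp
    also have "\<dots> = rho j (Sn j) (lft j C) * rho (k - j) (Lambda (k - j)) (rgt j C)"
      by (rule rho_mult[OF Sn_Sym_deg Lambda_Sym_deg C'])
    also have "\<dots> = (if lft j C = {} then 1 else 0) * (if rgt j C = {1..<k - j} then 1 else 0)"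
      using rho_Lambda[OF rgt_sub[OF C]] rho_Sn by simp
    also have "lft j C = {} \<longleftrightarrow> (\<forall>x\<in>C. j \<le> x)" by (auto simp: lft_def not_less)
    also have "rgt j C = {1..<k - j} \<longleftrightarrow> (\<forall>x. j < x \<and> x < k \<longrightarrow> x \<in> C)"
    proof
      assume H: "rgt j C = {1..<k - j}"
      show "\<forall>x. j < x \<and> x < k \<longrightarrow> x \<in> C"
      proof (intro allI impI)
        fix x assume x: "j < x \<and> x < k"
        then have "x - j \<in> rgt j C" using H by auto
        then obtain y where y: "y \<in> C" "j < y" "x - j = y - j" by (auto simp: rgt_def)
        then have "y = x" using x by simp
        then show "x \<in> C" using y by simp
      qed
    next
      assume H: "\<forall>x. j < x \<and> x < k \<longrightarrow> x \<in> C"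
      show "rgt j C = {1..<k - j}"
      proof
        show "rgt j C \<subseteq> {1..<k-j}" by (rule rgt_sub[OF C])
        show "{1..<k-j} \<subseteq> rgt j C"
        proof
          fix y assume y: "y \<in> {1..<k-j}"
          then have "j + y \<in> C" using H by auto
          then show "y \<in> rgt j C" unfolding rgt_def using y by (intro image_eqI[where x="j+y"]) auto
        qed
      qed
    qed
    finally show ?thesis by (simp add: P_def)
  qed
  define t where "t = (if C = {} then k else Min C)"
  have finC: "finite C" using C finite_subset by blast
  have tC: "C \<noteq> {} \<Longrightarrow> t \<in> C" using finC by (simp add: t_def)
  have tmin: "\<And>x. x \<in> C \<Longrightarrow> t \<le> x" using finC by (auto simp: t_def)
  have t1: "1 \<le> t" "t \<le> k"
  proof -
    show "1 \<le> t"
    proof (cases "C = {}")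
      case True then show ?thesis using k by (simp add: t_def)
    next
      case False then have "t \<in> C" by (rule tC)
      then show ?thesis using C by auto
    qed
    show "t \<le> k"
    proof (cases "C = {}")
      case True then show ?thesis by (simp add: t_def)
    next
      case False then have "t \<in> C" by (rule tC)
      then show ?thesis using C by auto
    qed
  qed
  have Pj: "j = t \<or> j = t - 1" if "P j" "j \<le> k" for j
  proof -
    have "j \<le> t"
    proof (cases "C = {}")
      case True then show ?thesis using that by (simp add: t_def)
    next
      case False then show ?thesis using tC that by (auto simp: P_def)
    qed
    moreover have "t - 1 \<le> j"
    proof (rule ccontr)
      assume "\<not> t - 1 \<le> j"
      then have "j < t - 1" "t - 1 < k" using t1 by auto
      then have "t - 1 \<in> C" using that by (auto simp: P_def)
      then have "t \<le> t - 1" by (rule tmin)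
      then show False using t1 by simp
    qed
    ultimately show ?thesis by auto
  qed
  have Pt: "P t \<longleftrightarrow> P (t - 1)"
  proof -
    have a: "\<forall>x\<in>C. t \<le> x" "\<forall>x\<in>C. t - 1 \<le> x" using tmin by force+
    have "(\<forall>x. t < x \<and> x < k \<longrightarrow> x \<in> C) \<longleftrightarrow> (\<forall>x. t - 1 < x \<and> x < k \<longrightarrow> x \<in> C)"
    proof
      assume H: "\<forall>x. t < x \<and> x < k \<longrightarrow> x \<in> C"
      show "\<forall>x. t - 1 < x \<and> x < k \<longrightarrow> x \<in> C"
      proof (intro allI impI)
        fix x assume x: "t - 1 < x \<and> x < k"
        show "x \<in> C"
        proof (cases "x = t")
          case True
          then have "C \<noteq> {}" using x by (auto simp: t_def)
          then show ?thesis using tC True by simp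
        next
          case False then show ?thesis using H x by auto
        qed
      qed
    qed auto
    then show ?thesis using a by (simp add: P_def)
  qed
  have "rho k (Eg k) C = (\<Sum>j\<le>k. (-1)^j * (if P j then 1 else 0))"
    unfolding Eg_def by (simp add: rho_sum rho_scale trm)
  also have "\<dots> = (\<Sum>j\<in>{t - 1, t}. (-1)^j * (if P j then 1 else 0))"
    by (rule sum.mono_neutral_right) (use t1 Pj in auto)
  also have "\<dots> = (-1)^(t-1) * (if P t then 1 else 0) + (-1)^t * (if P t then 1 else 0)"
    using t1 Pt by simp
  also have "\<dots> = 0"
  proof -
    have "(-1::rat)^t = - ((-1)^(t-1))" using t1 by (cases t) auto
    then show ?thesis by simp
  qed
  finally show "rho k (Eg k) C = rho k 0 C" by (simp add: rho_zero)
qed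

lemma Lambda_rec:
  assumes "1 \<le> k"
  shows "Lambda k = scaleS (-1) (\<Sum>i<k. scaleS ((-1)^Suc i) (mult (Sn (Suc i)) (Lambda (k - Suc i))))"
proof -
  have "Eg k = Lambda k + (\<Sum>i<k. scaleS ((-1)^Suc i) (mult (Sn (Suc i)) (Lambda (k - Suc i))))"
    unfolding Eg_def by (simp add: sum.atMost_shift Sn_0)
  then have "Lambda k + (\<Sum>i<k. scaleS ((-1)^Suc i) (mult (Sn (Suc i)) (Lambda (k - Suc i)))) = 0"
    using Eg_zero[OF assms] by simp
  then show ?thesis by (simp add: eq_neg_iff_add_eq_0 scaleS_def fun_eq_iff)
qed

lemma tri_swap: "(\<Sum>b\<le>(N::nat). \<Sum>c\<le>N-b. f b c) = (\<Sum>c\<le>N. \<Sum>b\<le>N-c. f b c)"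
proof -
  have "(\<Sum>b\<le>N. \<Sum>c\<le>N-b. f b c) = (\<Sum>(b,c)\<in>(SIGMA b:{..N}. {..N-b}). f b c)"
    by (rule sum.Sigma) simp_all
  also have "\<dots> = (\<Sum>(c,b)\<in>(SIGMA c:{..N}. {..N-c}). f b c)"
    by (rule sum.reindex_bij_witness[where i="\<lambda>(c,b). (b,c)" and j="\<lambda>(b,c). (c,b)"]) auto
  also have "\<dots> = (\<Sum>c\<le>N. \<Sum>b\<le>N-c. f b c)"
    by (rule sum.Sigma[symmetric]) simp_all
  finally show ?thesis .
qed

lemma G3: "(\<Sum>j\<le>(k::nat). \<Sum>a\<le>j. \<Sum>c\<le>k-j. g a (j-a) c) = (\<Sum>u\<le>k. \<Sum>a\<le>u. \<Sum>b\<le>k-u. g a b (u-a))"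
proof -
  have "(\<Sum>j\<le>k. \<Sum>a\<le>j. \<Sum>c\<le>k-j. g a (j-a) c) = (\<Sum>a\<le>k. \<Sum>b\<le>k-a. \<Sum>c\<le>k-(a+b). g a b c)"
    using tri_sum[where n=k and f="\<lambda>a j. \<Sum>c\<le>k-j. g a (j-a) c"] by simp
  also have "\<dots> = (\<Sum>a\<le>k. \<Sum>b\<le>k-a. \<Sum>c\<le>(k-a)-b. g a b c)" by (simp add: diff_diff_left)
  also have "\<dots> = (\<Sum>a\<le>k. \<Sum>c\<le>k-a. \<Sum>b\<le>(k-a)-c. g a b c)"
    by (rule sum.cong[OF refl], rule tri_swap)
  also have "\<dots> = (\<Sum>a\<le>k. \<Sum>c\<le>k-a. \<Sum>b\<le>k-(a+c). g a b c)" by (simp add: diff_diff_left)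
  also have "\<dots> = (\<Sum>u\<le>k. \<Sum>a\<le>u. \<Sum>b\<le>k-u. g a b (u-a))"
    using tri_sum[where n=k and f="\<lambda>a u. \<Sum>b\<le>k-u. g a b (u-a)"] by simp
  finally show ?thesis .
qed

section \<open>Coproduct of Lambda and tildeS\<close>

definition LL :: "nat \<Rightarrow> sym2" where
  "LL k = (\<Sum>a\<le>k. tensor (Lambda a) (Lambda (k - a)))"

definition DSn :: "nat \<Rightarrow> sym2" where
  "DSn j = (\<Sum>a\<le>j. tensor (Sn a) (Sn (j - a)))"

lemma DSn_0: "DSn 0 = tensor one_sym one_sym"
  by (simp add: DSn_def Sn_0)

lemma E2:
  assumes k: "1 \<le> k"
  shows "(\<Sum>j\<le>k. scaleT ((-1)^j) (tmult (DSn j) (LL (k - j)))) = 0"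
proof -
  define g where "g a b c = scaleT ((-1)^(a+b)) (tensor (mult (Sn a) (Lambda c)) (mult (Sn b) (Lambda (k-a-b-c))))" for a b c
  have "(\<Sum>j\<le>k. scaleT ((-1)^j) (tmult (DSn j) (LL (k - j)))) =
        (\<Sum>j\<le>k. \<Sum>a\<le>j. \<Sum>c\<le>k-j. g a (j-a) c)"
  proof (rule sum.cong[OF refl])
    fix j assume j: "j \<in> {..k}"
    have "tmult (DSn j) (LL (k - j)) = (\<Sum>a\<le>j. \<Sum>c\<le>k-j. tensor (mult (Sn a) (Lambda c)) (mult (Sn (j - a)) (Lambda (k - j - c))))"
      unfolding DSn_def LL_def
      apply (subst tmult_sum_left)
      apply (simp only: tmult_sum_right tmult_tensor)
      done
    then show "scaleT ((-1)^j) (tmult (DSn j) (LL (k - j))) = (\<Sum>a\<le>j. \<Sum>c\<le>k-j. g a (j-a) c)"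
      unfolding g_def using j by (simp add: VT.scale_sum_right diff_diff_left)
  qed
  also have "\<dots> = (\<Sum>u\<le>k. \<Sum>a\<le>u. \<Sum>b\<le>k-u. g a b (u-a))" by (rule G3)
  also have "\<dots> = (\<Sum>u\<le>k. tensor (Eg u) (Eg (k - u)))"
  proof (rule sum.cong[OF refl])
    fix u assume u: "u \<in> {..k}"
    have "tensor (Eg u) (Eg (k - u)) = (\<Sum>a\<le>u. \<Sum>b\<le>k-u. tensor (scaleS ((-1)^a) (mult (Sn a) (Lambda (u - a))))
        (scaleS ((-1)^b) (mult (Sn b) (Lambda (k - u - b)))))"
      unfolding Eg_def
      apply (subst tensor_sum_left)
      apply (simp only: tensor_sum_right)
      done
    also have "\<dots> = (\<Sum>a\<le>u. \<Sum>b\<le>k-u. g a b (u-a))"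
    proof (intro sum.cong refl)
      fix a b assume a: "a \<in> {..u}" and b: "b \<in> {..k-u}"
      have e: "k - a - b - (u - a) = k - u - b" using a u by auto
      show "tensor (scaleS ((-1)^a) (mult (Sn a) (Lambda (u - a)))) (scaleS ((-1)^b) (mult (Sn b) (Lambda (k - u - b)))) = g a b (u-a)"
        unfolding g_def e by (simp add: tensor_scale_left tensor_scale_right power_add)
    qed
    finally show "(\<Sum>a\<le>u. \<Sum>b\<le>k-u. g a b (u-a)) = tensor (Eg u) (Eg (k - u))" by simp
  qed
  also have "\<dots> = 0"
  proof (rule sum.neutral, rule ballI)
    fix u assume "u \<in> {..k}"
    show "tensor (Eg u) (Eg (k - u)) = 0"
    proof (cases "u = 0")
      case True then show ?thesis using Eg_zero[OF k] by (simp add: tensor_zero_right)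
    next
      case False then show ?thesis using Eg_zero[of u] by (simp add: tensor_zero_left)
    qed
  qed
  finally show ?thesis .
qed

lemma fsupp_Lambda: "fsupp (Lambda k)" by (rule Sym_deg_fsupp[OF Lambda_Sym_deg])
lemma fsupp_Sn: "fsupp (Sn k)" by (rule Sym_deg_fsupp[OF Sn_Sym_deg])

lemma Delta_Sn': "Delta (Sn j) = DSn j"
  by (simp add: Delta_Sn DSn_def)

lemma fsupp_mult_Sn_Lambda: "fsupp (mult (Sn j) (Lambda m))"
  by (rule Sym_deg_fsupp[OF mult_Sym_deg[OF Sn_Sym_deg Lambda_Sym_deg]])

lemma Delta_Lambda: "Delta (Lambda k) = LL k"
proof (induct k rule: less_induct)
  case (less k)
  show ?case
  proof (cases "k = 0")
    case True then show ?thesis by (simp add: Lambda_0 Delta_one LL_def)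
  next
    case False
    then have k: "1 \<le> k" by simp
    define X where "X = (\<Sum>i<k. scaleS ((-1)^Suc i) (mult (Sn (Suc i)) (Lambda (k - Suc i))))"
    have fX: "fsupp X" unfolding X_def by (intro fsupp_sum fsupp_scale fsupp_mult_Sn_Lambda)
    have trm2: "Delta (scaleS c (mult (Sn j) (Lambda m))) = scaleT c (tmult (DSn j) (Delta (Lambda m)))" for c j m
      by (simp only: Delta_scale[OF fsupp_mult_Sn_Lambda] Delta_mult[OF fsupp_Sn fsupp_Lambda] Delta_Sn DSn_def)
    have "Delta (Lambda k) = scaleT (-1) (Delta X)"
      by (subst Lambda_rec[OF k]) (simp only: X_def[symmetric] Delta_scale[OF fX])
    also have "Delta X = (\<Sum>i<k. Delta (scaleS ((-1)^Suc i) (mult (Sn (Suc i)) (Lambda (k - Suc i)))))"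
      unfolding X_def by (rule Delta_sum) (intro fsupp_scale fsupp_mult_Sn_Lambda)
    also have "\<dots> = (\<Sum>i<k. scaleT ((-1)^Suc i) (tmult (DSn (Suc i)) (Delta (Lambda (k - Suc i)))))"
      by (simp only: trm2)
    also have "\<dots> = (\<Sum>i<k. scaleT ((-1)^Suc i) (tmult (DSn (Suc i)) (LL (k - Suc i))))"
    proof -
      have "Delta (Lambda (k - Suc i)) = LL (k - Suc i)" if "i \<in> {..<k}" for i
        using less that by simp
      then show ?thesis by (intro sum.cong refl) simp_all
    qed
    also have "scaleT (-1) (\<Sum>i<k. scaleT ((-1)^Suc i) (tmult (DSn (Suc i)) (LL (k - Suc i)))) = LL k"
    proof -
      have "(\<Sum>j\<le>k. scaleT ((-1)^j) (tmult (DSn j) (LL (k - j)))) =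
          LL k + (\<Sum>i<k. scaleT ((-1)^Suc i) (tmult (DSn (Suc i)) (LL (k - Suc i))))"
        by (simp add: sum.atMost_shift DSn_0 tmult_one_left)
      then have h: "LL k + (\<Sum>i<k. scaleT ((-1)^Suc i) (tmult (DSn (Suc i)) (LL (k - Suc i)))) = 0"
        using E2[OF k] by simp
      have sc: "scaleT (-1) S = - S" for S
        using VT.scale_minus_left[of 1 S] by simp
      have "LL k = - (\<Sum>i<k. scaleT ((-1)^Suc i) (tmult (DSn (Suc i)) (LL (k - Suc i))))"
        using h by (simp only: eq_neg_iff_add_eq_0)
      then show ?thesis by (simp only: sc)
    qed
    finally show ?thesis .
  qed
qed

lemma Delta_tildeS: "Delta (tildeS n) = (\<Sum>p\<le>n. tensor (tildeS p) (tildeS (n - p)))"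
proof -
  define g where "g a b c = tensor (mult (Lambda a) (Sn c)) (mult (Lambda b) (Sn (n-a-b-c)))" for a b c
  have "Delta (tildeS n) = (\<Sum>k\<le>n. tmult (LL k) (DSn (n - k)))"
    unfolding tildeS_def
    by (simp add: Delta_sum Delta_mult fsupp_Lambda fsupp_Sn Delta_Lambda Delta_Sn DSn_def
        Sym_deg_fsupp[OF mult_Sym_deg[OF Lambda_Sym_deg Sn_Sym_deg]])
  also have "\<dots> = (\<Sum>k\<le>n. \<Sum>a\<le>k. \<Sum>c\<le>n-k. g a (k-a) c)"
  proof (rule sum.cong[OF refl])
    fix k assume k: "k \<in> {..n}"
    show "tmult (LL k) (DSn (n - k)) = (\<Sum>a\<le>k. \<Sum>c\<le>n-k. g a (k-a) c)"
      unfolding DSn_def LL_def g_def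
      apply (subst tmult_sum_left)
      apply (simp only: tmult_sum_right tmult_tensor)
      apply (intro sum.cong refl)
      using k apply (simp add: diff_diff_left)
      done
  qed
  also have "\<dots> = (\<Sum>u\<le>n. \<Sum>a\<le>u. \<Sum>b\<le>n-u. g a b (u-a))" by (rule G3)
  also have "\<dots> = (\<Sum>u\<le>n. tensor (tildeS u) (tildeS (n - u)))"
  proof (rule sum.cong[OF refl])
    fix u assume u: "u \<in> {..n}"
    have "tensor (tildeS u) (tildeS (n - u)) = (\<Sum>a\<le>u. \<Sum>b\<le>n-u. tensor (mult (Lambda a) (Sn (u - a)))
        (mult (Lambda b) (Sn (n - u - b))))"
      unfolding tildeS_def
      apply (subst tensor_sum_left)
      apply (simp only: tensor_sum_right)
      done
    also have "\<dots> = (\<Sum>a\<le>u. \<Sum>b\<le>n-u. g a b (u-a))"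
    proof (intro sum.cong refl)
      fix a b assume a: "a \<in> {..u}" and b: "b \<in> {..n-u}"
      have e: "n - a - b - (u - a) = n - u - b" using a u by auto
      show "tensor (mult (Lambda a) (Sn (u - a))) (mult (Lambda b) (Sn (n - u - b))) = g a b (u-a)"
        unfolding g_def e by simp
    qed
    finally show "(\<Sum>a\<le>u. \<Sum>b\<le>n-u. g a b (u-a)) = tensor (tildeS u) (tildeS (n - u))" by simp
  qed
  finally show ?thesis .
qed

section \<open>Closure of P under the coproduct\<close>

definition TS :: "sym2 set" where
  "TS = {tensor u v | u v. u \<in> Pall \<and> v \<in> Pall}"

lemma TSI: "u \<in> Pall \<Longrightarrow> v \<in> Pall \<Longrightarrow> tensor u v \<in> TS"
  unfolding TS_def by blast

lemma tmult_subspace_right: "VT.subspace {Y. tmult X Y \<in> VT.span TS}"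
proof (rule VT.subspaceI)
  show "0 \<in> {Y. tmult X Y \<in> VT.span TS}" by (simp add: tmult_zero_right VT.span_zero)
next
  fix x y assume "x \<in> {Y. tmult X Y \<in> VT.span TS}" "y \<in> {Y. tmult X Y \<in> VT.span TS}"
  then show "x + y \<in> {Y. tmult X Y \<in> VT.span TS}" by (simp add: tmult_add_right VT.span_add)
next
  fix c x assume "x \<in> {Y. tmult X Y \<in> VT.span TS}"
  then show "scaleT c x \<in> {Y. tmult X Y \<in> VT.span TS}" by (simp add: tmult_scale_right VT.span_scale)
qed

lemma tmult_subspace_left: "VT.subspace {X. tmult X Y \<in> VT.span TS}"
proof (rule VT.subspaceI)
  show "0 \<in> {X. tmult X Y \<in> VT.span TS}" by (simp add: tmult_zero_left VT.span_zero)
next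
  fix x y assume "x \<in> {X. tmult X Y \<in> VT.span TS}" "y \<in> {X. tmult X Y \<in> VT.span TS}"
  then show "x + y \<in> {X. tmult X Y \<in> VT.span TS}" by (simp add: tmult_add_left VT.span_add)
next
  fix c x assume "x \<in> {X. tmult X Y \<in> VT.span TS}"
  then show "scaleT c x \<in> {X. tmult X Y \<in> VT.span TS}" by (simp add: tmult_scale_left VT.span_scale)
qed

lemma tmult_TS: "x \<in> TS \<Longrightarrow> y \<in> TS \<Longrightarrow> tmult x y \<in> TS"
proof -
  assume x: "x \<in> TS" and y: "y \<in> TS"
  obtain u v where 1: "x = tensor u v" "u \<in> Pall" "v \<in> Pall" using x by (auto simp: TS_def)
  obtain u' v' where 2: "y = tensor u' v'" "u' \<in> Pall" "v' \<in> Pall" using y by (auto simp: TS_def)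
  show "tmult x y \<in> TS" using 1 2 by (simp add: tmult_tensor Pall_mult TSI)
qed

lemma tmult_span:
  assumes X: "X \<in> VT.span TS" and Y: "Y \<in> VT.span TS"
  shows "tmult X Y \<in> VT.span TS"
proof -
  have gen: "tmult x Y' \<in> VT.span TS" if x: "x \<in> TS" and Y': "Y' \<in> VT.span TS" for x Y'
  proof -
    have "TS \<subseteq> {Y. tmult x Y \<in> VT.span TS}"
    proof
      fix y assume "y \<in> TS"
      then have "tmult x y \<in> TS" by (rule tmult_TS[OF x])
      then show "y \<in> {Y. tmult x Y \<in> VT.span TS}" by (simp add: VT.span_base)
    qed
    then have "VT.span TS \<subseteq> {Y. tmult x Y \<in> VT.span TS}"
      by (rule VT.span_minimal[OF _ tmult_subspace_right])
    then show ?thesis using Y' by blast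
  qed
  have "TS \<subseteq> {X. tmult X Y \<in> VT.span TS}"
  proof
    fix x assume "x \<in> TS"
    then show "x \<in> {X. tmult X Y \<in> VT.span TS}" using gen[OF _ Y] by simp
  qed
  then have "VT.span TS \<subseteq> {X. tmult X Y \<in> VT.span TS}"
    by (rule VT.span_minimal[OF _ tmult_subspace_left])
  then show ?thesis using X by blast
qed

lemma tildeS_Pall: "tildeS n \<in> Pall"
  using theta_Sym_eq theta_Sn Sn_Sym_deg Sym_deg_Sym by (metis image_eqI)

lemma Delta_tildeS_span: "Delta (tildeS n) \<in> VT.span TS"
  unfolding Delta_tildeS
  by (intro VT.span_sum VT.span_base TSI tildeS_Pall)

lemma Delta_thetaS_span: "Delta (thetaS I) \<in> VT.span TS"
proof (induct I)
  case Nil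
  have "tensor one_sym one_sym \<in> TS" by (rule TSI[OF one_Pall one_Pall])
  then show ?case by (simp add: thetaS_Nil Delta_one VT.span_base)
next
  case (Cons i I)
  have "Delta (thetaS (i # I)) = tmult (Delta (tildeS i)) (Delta (thetaS I))"
    unfolding thetaS_Cons
    by (rule Delta_mult[OF Sym_deg_fsupp[OF tildeS_Sym_deg] Sym_deg_fsupp[OF thetaS_Sym_deg]])
  then show ?case using tmult_span[OF Delta_tildeS_span Cons] by simp
qed

theorem Delta_Pall: "F \<in> Pall \<Longrightarrow> Delta F \<in> tensor_sq Pall"
proof -
  assume "F \<in> Pall"
  then obtain G where G: "G \<in> Sym" "F = theta G" using theta_Sym_eq by blast
  have "Delta (theta G) = (\<Sum>I\<in>{I. G I \<noteq> 0}. scaleT (G I) (Delta (thetaS I)))"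
    unfolding theta_def
    by (simp add: Delta_sum Delta_scale fsupp_scale Sym_deg_fsupp[OF thetaS_Sym_deg])
  also have "\<dots> \<in> VT.span TS"
    by (intro VT.span_sum VT.span_scale Delta_thetaS_span)
  finally show ?thesis using G by (simp add: tensor_sq_def TS_def)
qed


theorem mainTheorem1:
  shows "(\<forall>n. theta ` Sym_deg n = Pspace n)
    \<and> theta ` Sym = Pall
    \<and> one_sym \<in> Pall
    \<and> (\<forall>F\<in>Pall. \<forall>G\<in>Pall. mult F G \<in> Pall)
    \<and> (\<forall>F\<in>Pall. Delta F \<in> tensor_sq Pall)
    \<and> (\<forall>n. vector_space.dim scaleS (Pspace n) = fib_f n)
    \<and> (\<forall>n\<ge>1. card {I \<in> comps n. \<forall>i\<in>set I. odd i} = fib_f n)"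
  using theta_image_eq theta_Sym_eq one_Pall Pall_mult Delta_Pall dim_Pspace odd_comps_count
  by blast

end
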